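(* Let $G=(V,E)$ be a hypergraph (that is, $E$ is a collection of subsets of $V$, each of cardinality $\ge 2$). Then \begin{equation} \exp \Biggl( \sum_{A \in E} w_A f_A^{(\lambda)} \Biggr) \;= \!\! \sum_{\substack{ F\in \mathcal{F}(G) \\ F = (F_1,\ldots,F_{\ell})}} \!\! \Biggl( \prod\limits_{A \in F} w_A \Biggr) \, \prod_{\alpha=1}^{\ell} f_{V(F_\alpha)}^{(\lambda)} \end{equation} where the sum runs over spanning hyperforests $F$ in $G$ with components $F_1,\ldots, F_{\ell}$, and $V(F_\alpha)$ is the vertex set of the hypertree $F_\alpha$. More generally, \begin{equation} \exp \Biggl( \sum_{A \in E} w_A f_A^{(\lambda_A)} \Biggr) \;= \!\! \sum_{\substack{ F\in \mathcal{F}(G) \\ F = (F_1,\ldots, F_{\ell})}} \!\! \Biggl( \prod\limits_{A \in F} w_A \Biggr) \, \prod_{\alpha=1}^{\ell} f_{V(F_\alpha)}^{(\lambda_\alpha)} \end{equation} where $\lambda_\alpha$ is the weighted average $\lambda_\alpha = \sum_{A} (|A|-1)\lambda_A \big/ \sum_{A}(|A|-1)$, both sums taken over the hyperedges $A$ contained in the hypertree $F_\alpha$ (equivalently the denominator is $|V(F_\alpha)|-1$).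
   Context: $V$ is a finite set; for each $i\in V$ there is a pair $\psi_i,{\bar{\psi}}_i$ of generators of a Grassmann algebra. For $A\subseteq V$, $\tau_A=\prod_{i\in A}{\bar{\psi}}_i\psi_i$ (with $\tau_\emptyset=1$), and for a number $\lambda$, $f_A^{(\lambda)} = \lambda (1-|A|) \tau_A + \sum_{i \in A} \tau_{A \smallsetminus i} - \sum_{i,j \in A,\, i \neq j} {\bar{\psi}}_i \psi_j \tau_{A \smallsetminus \{i,j\}}$. $\mathcal{F}(G)$ denotes the set of spanning hyperforests of $G$ (spanning subhypergraphs with no cycles), identified with their hyperedge sets. The $w_A$ are arbitrary hyperedge weights and $\lambda_A$ arbitrary numbers attached to hyperedges. *)

theory Defs
  imports Complex_Main "HOL-Library.Function_Algebras" "HOL-Library.Product_Lexorder"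
begin

text \<open>Grassmann algebra over the reals with generators psi_i = (i,True) and
  psibar_i = (i,False), i ranging over a linearly ordered type 'v.
  An element is given by its coefficient function on (finite) sets of generators;
  the monomial of a finite set S of generators is the product of its generators in
  increasing order.  Addition (and finite sums, negation, subtraction) are pointwise
  (from Function_Algebras); the Grassmann product is gmul (NOT the pointwise times).\<close>

type_synonym 'v grass = "('v \<times> bool) set \<Rightarrow> real"

definition gsign :: "('v::linorder \<times> bool) set \<Rightarrow> ('v \<times> bool) set \<Rightarrow> real" where
  "gsign T U = (-1) ^ card {(t, u). t \<in> T \<and> u \<in> U \<and> u < t}"

definition gmul :: "'v::linorder grass \<Rightarrow> 'v grass \<Rightarrow> 'v grass" (infixl "\<odot>" 70) where
  "gmul x y = (\<lambda>S. if finite S then (\<Sum>T\<in>Pow S. gsign T (S - T) * x T * y (S - T)) else 0)"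

definition gone :: "'v grass" where
  "gone = (\<lambda>S. if S = {} then 1 else 0)"

definition gscale :: "real \<Rightarrow> 'v grass \<Rightarrow> 'v grass" where
  "gscale c x = (\<lambda>S. c * x S)"

definition gen :: "'v \<times> bool \<Rightarrow> 'v grass" where
  "gen g = (\<lambda>S. if S = {g} then 1 else 0)"

definition psi :: "'v \<Rightarrow> 'v grass" where
  "psi i = gen (i, True)"

definition psibar :: "'v \<Rightarrow> 'v grass" where
  "psibar i = gen (i, False)"

primrec gpow :: "'v::linorder grass \<Rightarrow> nat \<Rightarrow> 'v grass" where
  "gpow x 0 = gone"
| "gpow x (Suc n) = x \<odot> gpow x n"

definition gprod_list :: "'v::linorder grass list \<Rightarrow> 'v grass" where
  "gprod_list xs = foldr gmul xs gone"

text \<open>Product over a finite index set (taken in some enumeration; for pairwise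
  commuting (e.g. even) factors this does not depend on the enumeration).\<close>
definition gprod_set :: "'b set \<Rightarrow> ('b \<Rightarrow> 'v::linorder grass) \<Rightarrow> 'v grass" where
  "gprod_set S f = gprod_list (map f (SOME xs. distinct xs \<and> set xs = S))"

text \<open>On the coefficient of a finite set S only the terms
  n <= card S contribute, so the series is truncated exactly there.\<close>
definition gexp :: "'v::linorder grass \<Rightarrow> 'v grass" where
  "gexp x = (\<lambda>S. exp (x {}) *
      (\<Sum>n\<le>card S. gpow (x - gscale (x {}) gone) n S / fact n))"

definition tau :: "'v::linorder set \<Rightarrow> 'v grass" where
  "tau A = gprod_list (map (\<lambda>i. psibar i \<odot> psi i) (sorted_list_of_set A))"

definition fA :: "real \<Rightarrow> 'v::linorder set \<Rightarrow> 'v grass" where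
  "fA lam A =
     gscale (lam * (1 - real (card A))) (tau A)
     + (\<Sum>i\<in>A. tau (A - {i}))
     - (\<Sum>i\<in>A. \<Sum>j\<in>A - {i}. psibar i \<odot> psi j \<odot> tau (A - {i, j}))"

definition hcycle :: "'v set set \<Rightarrow> 'v list \<Rightarrow> 'v set list \<Rightarrow> bool" where
  "hcycle F xs es \<longleftrightarrow> length xs = length es \<and> 2 \<le> length xs \<and> distinct xs \<and> distinct es
     \<and> set es \<subseteq> F
     \<and> (\<forall>i<length xs. xs ! i \<in> es ! i \<and> xs ! ((i + 1) mod length xs) \<in> es ! i)"

definition hyperforest :: "'v set set \<Rightarrow> bool" where
  "hyperforest F \<longleftrightarrow> \<not> (\<exists>xs es. hcycle F xs es)"

text \<open>Spanning hyperforests of G = (V,E), identified with their hyperedge sets.\<close>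
definition spanning_hyperforests :: "'v set set \<Rightarrow> 'v set set set" where
  "spanning_hyperforests E = {F. F \<subseteq> E \<and> hyperforest F}"

definition hconn :: "'v set set \<Rightarrow> ('v \<times> 'v) set" where
  "hconn F = {(x, y). \<exists>A\<in>F. x \<in> A \<and> y \<in> A}\<^sup>*"

definition components :: "'v set \<Rightarrow> 'v set set \<Rightarrow> 'v set set" where
  "components V F = V // hconn F"

definition lam_avg :: "('v set \<Rightarrow> real) \<Rightarrow> 'v set set \<Rightarrow> 'v set \<Rightarrow> real" where
  "lam_avg lam F C =
     (\<Sum>A\<in>{A\<in>F. A \<subseteq> C}. (real (card A) - 1) * lam A)
       / (\<Sum>A\<in>{A\<in>F. A \<subseteq> C}. (real (card A) - 1))"

end

theory Submission
  imports Defs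
begin


lemma sum_fun_apply: "(\<Sum>i\<in>A. f i) x = (\<Sum>i\<in>A. f i x)"
  by (induction A rule: infinite_finite_induct) auto

definition ginv :: "('v::linorder \<times> bool) set \<Rightarrow> ('v \<times> bool) set \<Rightarrow> (('v \<times> bool) \<times> ('v \<times> bool)) set" where
  "ginv T U = {(t, u). t \<in> T \<and> u \<in> U \<and> u < t}"

lemma gsign_ginv: "gsign T U = (-1) ^ card (ginv T U)"
  by (simp add: gsign_def ginv_def)

lemma finite_ginv: "finite T \<Longrightarrow> finite U \<Longrightarrow> finite (ginv T U)"
  by (rule finite_subset[of _ "T \<times> U"]) (auto simp: ginv_def)

lemma gsign_Un_left:
  assumes "finite T" "finite U" "finite W" "T \<inter> U = {}"
  shows "gsign (T \<union> U) W = gsign T W * gsign U W"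
proof -
  have "ginv (T \<union> U) W = ginv T W \<union> ginv U W" by (auto simp: ginv_def)
  moreover have "ginv T W \<inter> ginv U W = {}" using assms(4) by (auto simp: ginv_def)
  ultimately have "card (ginv (T \<union> U) W) = card (ginv T W) + card (ginv U W)"
    using assms by (simp add: card_Un_disjoint finite_ginv)
  then show ?thesis by (simp add: gsign_ginv power_add)
qed

lemma gsign_Un_right:
  assumes "finite T" "finite U" "finite W" "U \<inter> W = {}"
  shows "gsign T (U \<union> W) = gsign T U * gsign T W"
proof -
  have "ginv T (U \<union> W) = ginv T U \<union> ginv T W" by (auto simp: ginv_def)
  moreover have "ginv T U \<inter> ginv T W = {}" using assms(4) unfolding ginv_def by blast
  ultimately have "card (ginv T (U \<union> W)) = card (ginv T U) + card (ginv T W)"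
    using assms by (simp add: card_Un_disjoint finite_ginv)
  then show ?thesis by (simp add: gsign_ginv power_add)
qed

lemma gsign_sq: "gsign T U * gsign T U = 1"
  unfolding gsign_def by (simp flip: power_mult_distrib)

lemma gsign_swap:
  assumes "finite T" "finite U" "T \<inter> U = {}"
  shows "gsign U T = (-1) ^ (card T * card U) * gsign T U"
proof -
  let ?B = "{(t, u). t \<in> T \<and> u \<in> U \<and> t < u}"
  have "card (ginv U T) = card ?B"
    by (rule bij_betw_same_card[of "\<lambda>(u,t). (t,u)"]) (auto simp: ginv_def bij_betw_def inj_on_def image_def)
  moreover have "T \<times> U = ginv T U \<union> ?B"
  proof -
    have "\<And>t u. t \<in> T \<Longrightarrow> u \<in> U \<Longrightarrow> u < t \<or> t < u"
      using assms(3) by (metis disjoint_iff neqE)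
    then show ?thesis unfolding ginv_def by auto
  qed
  moreover have "ginv T U \<inter> ?B = {}" by (auto simp: ginv_def)
  moreover have "finite ?B" by (rule finite_subset[of _ "T \<times> U"]) (use assms in auto)
  ultimately have "card (T \<times> U) = card (ginv T U) + card (ginv U T)"
    using assms by (simp add: card_Un_disjoint finite_ginv)
  then have "card T * card U = card (ginv T U) + card (ginv U T)"
    by (simp add: card_cartesian_product)
  then have E: "(-1::real) ^ (card T * card U) = gsign T U * gsign U T"
    by (simp add: gsign_ginv power_add)
  have "(-1::real) ^ (card T * card U) * gsign T U = gsign U T * (gsign T U * gsign T U)"
    unfolding E by (simp only: mult_ac)
  then show ?thesis by (simp add: gsign_sq)
qed

lemma gmul_apply: "finite S \<Longrightarrow> (x \<odot> y) S = (\<Sum>T\<in>Pow S. gsign T (S - T) * x T * y (S - T))"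
  by (simp add: gmul_def)

lemma gmul_infinite: "infinite S \<Longrightarrow> (x \<odot> y) S = 0"
  by (simp add: gmul_def)

lemma gmul_assoc: "(x \<odot> y) \<odot> z = x \<odot> (y \<odot> z)"
proof (rule ext)
  fix S :: "('a \<times> bool) set"
  show "((x \<odot> y) \<odot> z) S = (x \<odot> (y \<odot> z)) S"
  proof (cases "finite S")
    case False then show ?thesis by (simp add: gmul_infinite)
  next
    case fin: True
    let ?Q = "Sigma (Pow S) (\<lambda>T1. Pow (S - T1))"
    let ?g = "\<lambda>(T1, U). gsign T1 U * gsign T1 (S - T1 - U) * gsign U (S - T1 - U) * x T1 * y U * z (S - T1 - U)"
    have L: "((x \<odot> y) \<odot> z) S = sum ?g ?Q"
    proof -
      have "((x \<odot> y) \<odot> z) S = (\<Sum>T\<in>Pow S. \<Sum>T1\<in>Pow T. gsign T (S - T) * (gsign T1 (T - T1) * x T1 * y (T - T1)) * z (S - T))"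
        using fin by (simp add: gmul_apply finite_subset sum_distrib_left sum_distrib_right)
      also have "\<dots> = (\<Sum>(T, T1)\<in>Sigma (Pow S) Pow. gsign T (S - T) * (gsign T1 (T - T1) * x T1 * y (T - T1)) * z (S - T))"
        using fin by (subst sum.Sigma) (auto intro: finite_subset)
      also have "\<dots> = sum ?g ?Q"
      proof (rule sum.reindex_bij_witness[of _ "\<lambda>(T1, U). (T1 \<union> U, T1)" "\<lambda>(T, T1). (T1, T - T1)"])
        fix a assume "a \<in> Sigma (Pow S) Pow"
        then obtain T T1 where a: "a = (T, T1)" "T \<subseteq> S" "T1 \<subseteq> T" by auto
        define U where "U = T - T1"
        have fT1: "finite T1" and fU: "finite U" and fW: "finite (S - T1 - U)"
          using a fin by (auto intro: finite_subset simp: U_def)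
        have e1: "S - T = S - T1 - U" using a by (auto simp: U_def)
        have e2: "T = T1 \<union> U" using a by (auto simp: U_def)
        have "gsign T (S - T1 - U) = gsign T1 (S - T1 - U) * gsign U (S - T1 - U)"
          unfolding e2 using fT1 fU fW by (intro gsign_Un_left) (auto simp: U_def)
        then show "?g (case a of (T, T1) \<Rightarrow> (T1, T - T1)) = (case a of (T, T1) \<Rightarrow>
            gsign T (S - T) * (gsign T1 (T - T1) * x T1 * y (T - T1)) * z (S - T))"
          using a by (simp add: e1 U_def[symmetric] algebra_simps)
      qed auto
      finally show ?thesis .
    qed
    have R: "(x \<odot> (y \<odot> z)) S = sum ?g ?Q"
    proof -
      have "(x \<odot> (y \<odot> z)) S = (\<Sum>T1\<in>Pow S. \<Sum>U\<in>Pow (S - T1). gsign T1 (S - T1) * x T1 * (gsign U (S - T1 - U) * y U * z (S - T1 - U)))"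
        using fin by (simp add: gmul_apply sum_distrib_left)
      also have "\<dots> = (\<Sum>(T1, U)\<in>?Q. gsign T1 (S - T1) * x T1 * (gsign U (S - T1 - U) * y U * z (S - T1 - U)))"
        using fin by (subst sum.Sigma) (auto intro: finite_subset)
      also have "\<dots> = sum ?g ?Q"
      proof (rule sum.cong[OF refl])
        fix a assume "a \<in> ?Q"
        then obtain T1 U where a: "a = (T1, U)" "T1 \<subseteq> S" "U \<subseteq> S - T1" by auto
        have fT1: "finite T1" and fU: "finite U" and fW: "finite (S - T1 - U)"
          using a fin by (auto intro: finite_subset)
        have e: "S - T1 = U \<union> (S - T1 - U)" using a by auto
        have "gsign T1 (S - T1) = gsign T1 U * gsign T1 (S - T1 - U)"
          by (subst e, rule gsign_Un_right) (use fT1 fU fW in auto)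
        then show "(case a of (T1, U) \<Rightarrow> gsign T1 (S - T1) * x T1 * (gsign U (S - T1 - U) * y U * z (S - T1 - U))) = ?g a"
          using a by (simp add: algebra_simps)
      qed
      finally show ?thesis .
    qed
    show ?thesis using L R by simp
  qed
qed

lemma gmul_add_left: "(x + y) \<odot> z = x \<odot> z + y \<odot> z"
  by (rule ext) (simp add: gmul_def sum.distrib algebra_simps)
lemma gmul_add_right: "z \<odot> (x + y) = z \<odot> x + z \<odot> y"
  by (rule ext) (simp add: gmul_def sum.distrib algebra_simps)
lemma gmul_zero_left[simp]: "0 \<odot> z = 0"
  by (rule ext) (simp add: gmul_def)
lemma gmul_zero_right[simp]: "z \<odot> 0 = 0"
  by (rule ext) (simp add: gmul_def)
lemma gmul_uminus_left: "(- x) \<odot> z = - (x \<odot> z)"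
  by (rule ext) (simp add: gmul_def sum_negf)
lemma gmul_uminus_right: "z \<odot> (- x) = - (z \<odot> x)"
  by (rule ext) (simp add: gmul_def sum_negf)
lemma gmul_diff_left: "(x - y) \<odot> z = x \<odot> z - y \<odot> z"
  by (rule ext) (simp add: gmul_def sum_subtractf algebra_simps)
lemma gmul_diff_right: "z \<odot> (x - y) = z \<odot> x - z \<odot> y"
  by (rule ext) (simp add: gmul_def sum_subtractf algebra_simps)
lemma gmul_sum_left: "(\<Sum>i\<in>A. f i) \<odot> z = (\<Sum>i\<in>A. f i \<odot> z)"
  by (rule ext) (simp add: gmul_def sum_fun_apply sum_distrib_left sum_distrib_right sum.swap[of _ A])
lemma gmul_sum_right: "z \<odot> (\<Sum>i\<in>A. f i) = (\<Sum>i\<in>A. z \<odot> f i)"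
  by (rule ext) (simp add: gmul_def sum_fun_apply sum_distrib_left sum_distrib_right sum.swap[of _ A])
lemma gmul_gscale_left: "gscale c x \<odot> z = gscale c (x \<odot> z)"
  by (rule ext) (simp add: gmul_def gscale_def sum_distrib_left algebra_simps)
lemma gmul_gscale_right: "z \<odot> gscale c x = gscale c (z \<odot> x)"
  by (rule ext) (simp add: gmul_def gscale_def sum_distrib_left algebra_simps)

definition gfin :: "'v grass \<Rightarrow> bool" where
  "gfin x \<longleftrightarrow> (\<forall>S. infinite S \<longrightarrow> x S = 0)"

definition gev :: "'v grass \<Rightarrow> bool" where
  "gev x \<longleftrightarrow> (\<forall>S. odd (card S) \<longrightarrow> x S = 0)"

lemma gsign_empty_left[simp]: "gsign {} U = 1"
  by (simp add: gsign_def)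
lemma gsign_empty_right[simp]: "gsign T {} = 1"
  by (simp add: gsign_def)

lemma gone_gmul: "gfin x \<Longrightarrow> gone \<odot> x = x"
proof (rule ext)
  fix S assume g: "gfin x"
  show "(gone \<odot> x) S = x S"
  proof (cases "finite S")
    case True
    have "(gone \<odot> x) S = (\<Sum>T\<in>Pow S. gsign T (S - T) * gone T * x (S - T))"
      using True by (simp add: gmul_def)
    also have "\<dots> = (\<Sum>T\<in>Pow S. if T = {} then x S else 0)"
      by (rule sum.cong) (auto simp: gone_def)
    also have "\<dots> = x S" using True by (simp add: sum.delta')
    finally show ?thesis .
  qed (use g in \<open>simp add: gfin_def gmul_def\<close>)
qed

lemma gmul_gone: "gfin x \<Longrightarrow> x \<odot> gone = x"
proof (rule ext)
  fix S assume g: "gfin x"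
  show "(x \<odot> gone) S = x S"
  proof (cases "finite S")
    case True
    have "(x \<odot> gone) S = (\<Sum>T\<in>Pow S. gsign T (S - T) * x T * gone (S - T))"
      using True by (simp add: gmul_def)
    also have "\<dots> = (\<Sum>T\<in>Pow S. if T = S then x S else 0)"
      by (rule sum.cong) (auto simp: gone_def)
    also have "\<dots> = x S" using True by (simp add: sum.delta')
    finally show ?thesis .
  qed (use g in \<open>simp add: gfin_def gmul_def\<close>)
qed

lemma gmul_comm_even:
  assumes "gev x"
  shows "y \<odot> x = x \<odot> y"
proof (rule ext)
  fix S
  show "(y \<odot> x) S = (x \<odot> y) S"
  proof (cases "finite S")
    case fin: True
    have "(y \<odot> x) S = (\<Sum>T\<in>Pow S. gsign T (S - T) * y T * x (S - T))"
      using fin by (simp add: gmul_def)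
    also have "\<dots> = (\<Sum>U\<in>Pow S. gsign (S - U) U * y (S - U) * x U)"
      by (rule sum.reindex_bij_witness[of _ "\<lambda>U. S - U" "\<lambda>U. S - U"]) (auto simp: Diff_Diff_Int Int_absorb1)
    also have "\<dots> = (\<Sum>U\<in>Pow S. gsign U (S - U) * x U * y (S - U))"
    proof (rule sum.cong[OF refl])
      fix U assume U: "U \<in> Pow S"
      show "gsign (S - U) U * y (S - U) * x U = gsign U (S - U) * x U * y (S - U)"
      proof (cases "x U = 0")
        case False
        then have "even (card U)" using assms unfolding gev_def by blast
        then have p: "(-1::real) ^ (card U * card (S - U)) = 1" by simp
        have "gsign (S - U) U = (-1) ^ (card U * card (S - U)) * gsign U (S - U)"
          using U fin by (intro gsign_swap) (auto intro: finite_subset)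
        then show ?thesis unfolding p by simp
      qed simp
    qed
    also have "\<dots> = (x \<odot> y) S" using fin by (simp add: gmul_def)
    finally show ?thesis .
  qed (simp add: gmul_def)
qed

lemma gen_gmul_gen:
  "gen a \<odot> gen b = (\<lambda>S. if a \<noteq> b \<and> S = {a, b} then (if b < a then -1 else 1) else 0)"
proof (rule ext)
  fix S
  show "(gen a \<odot> gen b) S = (if a \<noteq> b \<and> S = {a, b} then (if b < a then -1 else 1) else 0)"
  proof (cases "finite S")
    case fin: True
    have "(gen a \<odot> gen b) S = (\<Sum>T\<in>Pow S. gsign T (S - T) * gen a T * gen b (S - T))"
      using fin by (simp add: gmul_def)
    also have "\<dots> = (\<Sum>T\<in>Pow S. if T = {a} then gsign {a} (S - {a}) * gen b (S - {a}) else 0)"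
      by (rule sum.cong) (simp_all add: gen_def)
    also have "\<dots> = (if {a} \<in> Pow S then gsign {a} (S - {a}) * gen b (S - {a}) else 0)"
      using fin by (intro sum.delta) simp
    also have "\<dots> = (if a \<noteq> b \<and> S = {a, b} then (if b < a then -1 else 1) else 0)"
    proof (cases "a \<noteq> b \<and> S = {a, b}")
      case True
      then have "S - {a} = {b}" by auto
      moreover have "gsign {a} {b} = (if b < a then -1 else 1)"
      proof -
        have "{(t, u). t \<in> {a} \<and> u \<in> {b} \<and> u < t} = (if b < a then {(a, b)} else {})" by auto
        then show ?thesis by (simp add: gsign_def)
      qed
      ultimately show ?thesis using True by (simp add: gen_def)
    next
      case False
      then have "\<not> ({a} \<subseteq> S \<and> S - {a} = {b})" by auto
      then show ?thesis using False by (auto simp add: gen_def)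
    qed
    finally show ?thesis .
  qed (auto simp add: gmul_def)
qed

lemma gen_anticomm: "gen a \<odot> gen b = - (gen b \<odot> gen a)"
proof (rule ext)
  fix S
  show "(gen a \<odot> gen b) S = (- (gen b \<odot> gen a)) S"
  proof (cases "a = b")
    case False
    then have "b < a \<longleftrightarrow> \<not> a < b" by auto
    then show ?thesis using False by (simp add: gen_gmul_gen insert_commute)
  qed (simp add: gen_gmul_gen)
qed

lemma gen_sq: "gen a \<odot> gen a = 0"
  by (rule ext) (simp add: gen_gmul_gen)



lemma gfin_gmul: "gfin (x \<odot> y)"
  by (simp add: gfin_def gmul_def)

lemma gev_gmul:
  assumes "gev x" "gev y"
  shows "gev (x \<odot> y)"
  unfolding gev_def
proof (intro allI impI)
  fix S :: "('a \<times> bool) set" assume odd: "odd (card S)"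
  show "(x \<odot> y) S = 0"
  proof (cases "finite S")
    case fin: True
    have "(x \<odot> y) S = (\<Sum>T\<in>Pow S. gsign T (S - T) * x T * y (S - T))"
      using fin by (simp add: gmul_def)
    also have "\<dots> = 0"
    proof (rule sum.neutral, rule ballI)
      fix T assume T: "T \<in> Pow S"
      then have "card S = card T + card (S - T)"
        using fin by (metis PowD card_Diff_subset finite_subset le_add_diff_inverse card_mono)
      then have "odd (card T) \<or> odd (card (S - T))" using odd by auto
      then show "gsign T (S - T) * x T * y (S - T) = 0"
        using assms by (auto simp: gev_def)
    qed
    finally show ?thesis .
  qed (simp add: gmul_def)
qed

typedef (overloaded) 'v ev = "{x :: 'v::linorder grass. gfin x \<and> gev x}"
  morphisms rep Abs_ev
  by (rule exI[of _ 0]) (simp add: gfin_def gev_def)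

setup_lifting type_definition_ev

lemma gfin_gone: "gfin gone" and gev_gone: "gev gone"
  by (auto simp: gfin_def gev_def gone_def)

instantiation ev :: (linorder) comm_ring_1
begin
lift_definition zero_ev :: "'a ev" is 0 by (simp add: gfin_def gev_def)
lift_definition one_ev :: "'a ev" is gone by (simp add: gfin_gone gev_gone)
lift_definition plus_ev :: "'a ev \<Rightarrow> 'a ev \<Rightarrow> 'a ev" is "(+)" by (simp add: gfin_def gev_def)
lift_definition minus_ev :: "'a ev \<Rightarrow> 'a ev \<Rightarrow> 'a ev" is "(-)" by (simp add: gfin_def gev_def)
lift_definition uminus_ev :: "'a ev \<Rightarrow> 'a ev" is "uminus" by (simp add: gfin_def gev_def)
lift_definition times_ev :: "'a ev \<Rightarrow> 'a ev \<Rightarrow> 'a ev" is gmul by (simp add: gfin_gmul gev_gmul)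
instance
proof
  fix a b c :: "'a ev"
  show "a * b * c = a * (b * c)" by transfer (rule gmul_assoc)
  show "a * b = b * a" by transfer (simp add: gmul_comm_even)
  show "1 * a = a" by transfer (simp add: gone_gmul)
  show "(a + b) * c = a * c + b * c" by transfer (rule gmul_add_left)
  show "(0::'a ev) \<noteq> 1" by transfer (simp add: fun_eq_iff gone_def exI[of _ "{}"])
  show "a + b + c = a + (b + c)" by transfer (simp add: add.assoc)
  show "a + b = b + a" by transfer (simp add: add.commute)
  show "0 + a = a" by transfer simp
  show "- a + a = 0" by transfer simp
  show "a - b = a + - b" by transfer simp
qed
end

lemma rep_sum: "rep (\<Sum>i\<in>A. f i) = (\<Sum>i\<in>A. rep (f i))"
  by (induction A rule: infinite_finite_induct) (simp_all add: zero_ev.rep_eq plus_ev.rep_eq)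

lemma rep_times: "rep (x * y) = rep x \<odot> rep y"
  by (rule times_ev.rep_eq)

lemma rep_prod_list: "rep (prod_list (map f xs)) = foldr gmul (map (rep \<circ> f) xs) gone"
  by (induction xs) (simp_all add: one_ev.rep_eq rep_times)

lift_definition cs :: "real \<Rightarrow> 'a::linorder ev" is "\<lambda>c. gscale c gone"
  by (auto simp: gfin_def gev_def gone_def gscale_def)

lemma cs_add: "cs (a + b) = cs a + cs b"
  by transfer (auto simp: gscale_def fun_eq_iff algebra_simps)
lemma cs_mult: "cs (a * b) = cs a * cs b"
  by transfer (simp add: gmul_gscale_left gmul_gscale_right gone_gmul gfin_gone, simp add: gscale_def fun_eq_iff)
lemma cs_one[simp]: "cs 1 = 1"
  by transfer (simp add: gscale_def)
lemma cs_zero[simp]: "cs 0 = 0"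
  by transfer (simp add: gscale_def fun_eq_iff)
lemma cs_uminus: "cs (- a) = - cs a"
  by transfer (simp add: gscale_def fun_eq_iff)
lemma cs_diff: "cs (a - b) = cs a - cs b"
  by transfer (simp add: gscale_def fun_eq_iff algebra_simps)
lemma cs_of_nat: "cs (real n) = of_nat n"
  by (induction n) (simp_all add: cs_add)
lemma cs_sum: "cs (\<Sum>i\<in>A. f i) = (\<Sum>i\<in>A. cs (f i))"
  by (induction A rule: infinite_finite_induct) (simp_all add: cs_add)
lemma cs_prod: "cs (\<Prod>i\<in>A. f i) = (\<Prod>i\<in>A. cs (f i))"
  by (induction A rule: infinite_finite_induct) (simp_all add: cs_mult)

lemma rep_cs_mult: "rep (cs c * x) = gscale c (rep x)"
proof -
  have "gfin (rep x)" using rep[of x] by simp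
  then show ?thesis by (simp add: rep_times cs.rep_eq gmul_gscale_left gone_gmul)
qed

lift_definition e :: "'a::linorder \<Rightarrow> 'a \<Rightarrow> 'a ev" is "\<lambda>i j. psibar i \<odot> psi j"
proof -
  fix i j :: 'a
  have "gev (psibar i \<odot> psi j)"
    by (auto simp: gev_def psibar_def psi_def gen_gmul_gen)
  then show "gfin (psibar i \<odot> psi j) \<and> gev (psibar i \<odot> psi j)" by (simp add: gfin_gmul)
qed


lemma raw_swap3: "gen b \<odot> (gen c \<odot> gen d) = - (gen d \<odot> (gen c \<odot> gen b))"
proof -
  have "gen b \<odot> (gen c \<odot> gen d) = - (gen b \<odot> (gen d \<odot> gen c))"
    by (subst gen_anticomm[of c d]) (simp add: gmul_uminus_right)
  also have "\<dots> = - ((gen b \<odot> gen d) \<odot> gen c)" by (simp add: gmul_assoc)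
  also have "\<dots> = (gen d \<odot> gen b) \<odot> gen c"
    by (subst gen_anticomm[of b d]) (simp add: gmul_uminus_left)
  also have "\<dots> = gen d \<odot> (gen b \<odot> gen c)" by (simp add: gmul_assoc)
  also have "\<dots> = - (gen d \<odot> (gen c \<odot> gen b))"
    by (subst gen_anticomm[of b c]) (simp add: gmul_uminus_right)
  finally show ?thesis .
qed

lemma raw_R1: "(gen a \<odot> gen b) \<odot> (gen c \<odot> gen d) = - ((gen a \<odot> gen d) \<odot> (gen c \<odot> gen b))"
proof -
  have "(gen a \<odot> gen b) \<odot> (gen c \<odot> gen d) = gen a \<odot> (gen b \<odot> (gen c \<odot> gen d))"
    by (rule gmul_assoc)
  also have "\<dots> = - (gen a \<odot> (gen d \<odot> (gen c \<odot> gen b)))"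
    by (subst raw_swap3) (rule gmul_uminus_right)
  also have "\<dots> = - ((gen a \<odot> gen d) \<odot> (gen c \<odot> gen b))"
    by (simp only: gmul_assoc)
  finally show ?thesis .
qed

lemma raw_R0row: "(gen a \<odot> gen b) \<odot> (gen a \<odot> gen c) = 0"
proof -
  have "(gen a \<odot> gen b) \<odot> (gen a \<odot> gen c) = gen a \<odot> ((gen b \<odot> gen a) \<odot> gen c)"
    by (simp add: gmul_assoc)
  also have "\<dots> = - (gen a \<odot> ((gen a \<odot> gen b) \<odot> gen c))"
    by (subst gen_anticomm[of b a]) (simp add: gmul_uminus_left gmul_uminus_right)
  also have "\<dots> = - (((gen a \<odot> gen a) \<odot> gen b) \<odot> gen c)"
    by (simp add: gmul_assoc)
  finally show ?thesis by (simp add: gen_sq)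
qed

lemma raw_R0col: "(gen a \<odot> gen b) \<odot> (gen c \<odot> gen b) = 0"
proof -
  have "(gen a \<odot> gen b) \<odot> (gen c \<odot> gen b) = gen a \<odot> (gen b \<odot> (gen c \<odot> gen b))"
    by (simp add: gmul_assoc)
  also have "\<dots> = - (gen a \<odot> (gen b \<odot> (gen b \<odot> gen c)))"
    by (subst gen_anticomm[of c b]) (simp add: gmul_uminus_right)
  also have "\<dots> = - (gen a \<odot> ((gen b \<odot> gen b) \<odot> gen c))"
    by (simp add: gmul_assoc)
  finally show ?thesis by (simp add: gen_sq)
qed

lemma e_R1: "e i j * e k l = - (e i l * e k j)"
  unfolding psibar_def psi_def by transfer (unfold psibar_def psi_def, rule raw_R1)

lemma e_row: "e i j * e i l = 0"
  by transfer (simp add: psibar_def psi_def raw_R0row)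

lemma e_col: "e i j * e k j = 0"
  by transfer (simp add: psibar_def psi_def raw_R0col)



definition tauE :: "'a::linorder set \<Rightarrow> 'a ev" where
  "tauE A = (\<Prod>k\<in>A. e k k)"
definition sigE :: "'a::linorder set \<Rightarrow> 'a ev" where
  "sigE A = (\<Sum>i\<in>A. tauE (A - {i}))"
definition rhoE :: "'a::linorder set \<Rightarrow> 'a ev" where
  "rhoE A = (\<Sum>i\<in>A. \<Sum>j\<in>A - {i}. e i j * tauE (A - {i, j}))"
definition hE :: "'a::linorder ev \<Rightarrow> 'a set \<Rightarrow> 'a ev" where
  "hE c A = - (c * tauE A) + sigE A - rhoE A"
definition XE :: "'a::linorder \<Rightarrow> 'a set \<Rightarrow> 'a ev" where
  "XE v A = (\<Sum>j\<in>A. e v j * tauE (A - {j}))"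
definition YE :: "'a::linorder \<Rightarrow> 'a set \<Rightarrow> 'a ev" where
  "YE v A = (\<Sum>i\<in>A. e i v * tauE (A - {i}))"

lemma tau_ins: "finite A \<Longrightarrow> v \<notin> A \<Longrightarrow> tauE (insert v A) = e v v * tauE A"
  by (simp add: tauE_def)

lemma tau_empty[simp]: "tauE {} = 1"
  by (simp add: tauE_def)

lemma sig_ins:
  assumes "finite A" "v \<notin> A"
  shows "sigE (insert v A) = tauE A + e v v * sigE A"
proof -
  have "sigE (insert v A) = tauE (insert v A - {v}) + (\<Sum>i\<in>A. tauE (insert v A - {i}))"
    using assms by (simp add: sigE_def)
  also have "insert v A - {v} = A" using assms by auto
  also have "(\<Sum>i\<in>A. tauE (insert v A - {i})) = (\<Sum>i\<in>A. e v v * tauE (A - {i}))"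
  proof (rule sum.cong[OF refl])
    fix i assume "i \<in> A"
    then have "insert v A - {i} = insert v (A - {i})" using assms by auto
    then show "tauE (insert v A - {i}) = e v v * tauE (A - {i})"
      using assms by (simp add: tau_ins)
  qed
  finally show ?thesis by (simp add: sigE_def sum_distrib_left)
qed

lemma rho_ins:
  assumes "finite A" "v \<notin> A"
  shows "rhoE (insert v A) = e v v * rhoE A + XE v A + YE v A"
proof -
  have "rhoE (insert v A) = (\<Sum>j\<in>insert v A - {v}. e v j * tauE (insert v A - {v, j}))
      + (\<Sum>i\<in>A. \<Sum>j\<in>insert v A - {i}. e i j * tauE (insert v A - {i, j}))"
    using assms by (simp add: rhoE_def)
  also have "(\<Sum>j\<in>insert v A - {v}. e v j * tauE (insert v A - {v, j})) = XE v A"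
  proof -
    have "insert v A - {v} = A" using assms by auto
    moreover have "\<And>j. j \<in> A \<Longrightarrow> insert v A - {v, j} = A - {j}" using assms by auto
    ultimately show ?thesis by (simp add: XE_def)
  qed
  also have "(\<Sum>i\<in>A. \<Sum>j\<in>insert v A - {i}. e i j * tauE (insert v A - {i, j}))
      = (\<Sum>i\<in>A. e i v * tauE (A - {i}) + e v v * (\<Sum>j\<in>A - {i}. e i j * tauE (A - {i, j})))"
  proof (rule sum.cong[OF refl])
    fix i assume i: "i \<in> A"
    have "insert v A - {i} = insert v (A - {i})" using assms i by auto
    then have "(\<Sum>j\<in>insert v A - {i}. e i j * tauE (insert v A - {i, j}))
        = e i v * tauE (insert v A - {i, v}) + (\<Sum>j\<in>A - {i}. e i j * tauE (insert v A - {i, j}))"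
      using assms by simp
    also have "insert v A - {i, v} = A - {i}" using assms i by auto
    also have "(\<Sum>j\<in>A - {i}. e i j * tauE (insert v A - {i, j})) = (\<Sum>j\<in>A - {i}. e v v * (e i j * tauE (A - {i, j})))"
    proof (rule sum.cong[OF refl])
      fix j assume "j \<in> A - {i}"
      then have "insert v A - {i, j} = insert v (A - {i, j})" using assms i by auto
      then show "e i j * tauE (insert v A - {i, j}) = e v v * (e i j * tauE (A - {i, j}))"
        using assms by (simp add: tau_ins mult_ac)
    qed
    finally show "(\<Sum>j\<in>insert v A - {i}. e i j * tauE (insert v A - {i, j}))
      = e i v * tauE (A - {i}) + e v v * (\<Sum>j\<in>A - {i}. e i j * tauE (A - {i, j}))"
      by (simp add: sum_distrib_left)
  qed
  also have "\<dots> = YE v A + e v v * rhoE A"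
    by (simp add: sum.distrib YE_def rhoE_def sum_distrib_left)
  finally show ?thesis by (simp add: algebra_simps)
qed

lemma h_ins:
  assumes "finite A" "v \<notin> A"
  shows "hE c (insert v A) = tauE A + e v v * hE c A - XE v A - YE v A"
  using assms by (simp add: hE_def tau_ins sig_ins rho_ins algebra_simps)


lemma ringA:
  fixes tA tB E hA hB xA xB yA yB KAB KBA :: "'a::comm_ring_1"
  assumes "E * E = 0" "E * xA = 0" "E * xB = 0" "E * yA = 0" "E * yB = 0" "xA * xB = 0" "yA * yB = 0"
    "xA * yB = - (E * KBA)" "yA * xB = - (E * KAB)"
  shows "(tA + E * hA - xA - yA) * (tB + E * hB - xB - yB)
     = tA * tB + E * (hB * tA + hA * tB - KAB - KBA) - (xA * tB + tA * xB) - (yA * tB + tA * yB)"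
proof -
  have "(tA + E * hA - xA - yA) * (tB + E * hB - xB - yB) = tA*tB + E*(hB*tA) - tA*xB - tA*yB + E*(hA*tB)
     + (E*E)*(hA*hB) - hA*(E*xB) - hA*(E*yB) - xA*tB - hB*(E*xA) + xA*xB + xA*yB - yA*tB - hB*(E*yA)
     + yA*xB + yA*yB"
    by (simp add: algebra_simps)
  also have "\<dots> = tA*tB + E*(hB*tA) - tA*xB - tA*yB + E*(hA*tB) - xA*tB - E * KBA - yA*tB - E * KAB"
    by (simp add: assms)
  finally show ?thesis by (simp add: algebra_simps)
qed

lemma ringB:
  fixes a b c d :: "'a::comm_ring_1"
  assumes "a * a = 0" "b * b = 0" "c * c = 0" "d * d = 0" "a * c = 0" "a * d = 0" "b * c = 0" "b * d = 0"
    "c * d = - (a * b)"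
  shows "(b + a - c - d) * (b + a - c - d) = 0"
proof -
  have "(b + a - c - d) * (b + a - c - d) = b*b + a*a + c*c + d*d + 2*(a*b) - 2*(b*c) - 2*(b*d) - 2*(a*c) - 2*(a*d) + 2*(c*d)"
    by (simp add: algebra_simps)
  then show ?thesis by (simp add: assms)
qed


lemma tau_un: "finite A \<Longrightarrow> finite B \<Longrightarrow> A \<inter> B = {} \<Longrightarrow> tauE (A \<union> B) = tauE A * tauE B"
  by (simp add: tauE_def prod.union_disjoint)

lemma lin_un:
  assumes "finite A" "finite B" "A \<inter> B = {}"
  shows "(\<Sum>i\<in>A \<union> B. g i * tauE (A \<union> B - {i}))
    = (\<Sum>i\<in>A. g i * tauE (A - {i})) * tauE B + tauE A * (\<Sum>i\<in>B. g i * tauE (B - {i}))"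
proof -
  have "(\<Sum>i\<in>A \<union> B. g i * tauE (A \<union> B - {i})) = (\<Sum>i\<in>A. g i * tauE (A \<union> B - {i})) + (\<Sum>i\<in>B. g i * tauE (A \<union> B - {i}))"
    using assms by (simp add: sum.union_disjoint)
  also have "(\<Sum>i\<in>A. g i * tauE (A \<union> B - {i})) = (\<Sum>i\<in>A. g i * tauE (A - {i}) * tauE B)"
  proof (rule sum.cong[OF refl])
    fix i assume "i \<in> A"
    then have "A \<union> B - {i} = (A - {i}) \<union> B" using assms by auto
    moreover have "tauE ((A - {i}) \<union> B) = tauE (A - {i}) * tauE B" by (rule tau_un) (use assms in auto)
    ultimately show "g i * tauE (A \<union> B - {i}) = g i * tauE (A - {i}) * tauE B"
      by (simp add: mult_ac)
  qed
  also have "(\<Sum>i\<in>B. g i * tauE (A \<union> B - {i})) = (\<Sum>i\<in>B. tauE A * (g i * tauE (B - {i})))"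
  proof (rule sum.cong[OF refl])
    fix i assume "i \<in> B"
    then have "A \<union> B - {i} = A \<union> (B - {i})" using assms by auto
    moreover have "tauE (A \<union> (B - {i})) = tauE A * tauE (B - {i})" by (rule tau_un) (use assms in auto)
    ultimately show "g i * tauE (A \<union> B - {i}) = tauE A * (g i * tauE (B - {i}))"
      by (simp add: mult_ac)
  qed
  finally show ?thesis by (simp add: sum_distrib_left sum_distrib_right)
qed

lemma sig_un: "finite A \<Longrightarrow> finite B \<Longrightarrow> A \<inter> B = {} \<Longrightarrow> sigE (A \<union> B) = sigE A * tauE B + tauE A * sigE B"
  using lin_un[of A B "\<lambda>_. 1"] by (simp add: sigE_def)
lemma X_un: "finite A \<Longrightarrow> finite B \<Longrightarrow> A \<inter> B = {} \<Longrightarrow> XE v (A \<union> B) = XE v A * tauE B + tauE A * XE v B"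
  using lin_un[of A B "\<lambda>j. e v j"] by (simp add: XE_def)
lemma Y_un: "finite A \<Longrightarrow> finite B \<Longrightarrow> A \<inter> B = {} \<Longrightarrow> YE v (A \<union> B) = YE v A * tauE B + tauE A * YE v B"
  using lin_un[of A B "\<lambda>i. e i v"] by (simp add: YE_def)

definition KE :: "'a::linorder set \<Rightarrow> 'a set \<Rightarrow> 'a ev" where
  "KE A B = (\<Sum>i\<in>A. \<Sum>j\<in>B. e i j * (tauE (A - {i}) * tauE (B - {j})))"

lemma rho_inner:
  assumes "finite A" "finite B" "A \<inter> B = {}" "i \<in> A"
  shows "(\<Sum>j\<in>A \<union> B - {i}. e i j * tauE (A \<union> B - {i, j}))
    = (\<Sum>j\<in>A - {i}. e i j * tauE (A - {i, j})) * tauE B + (\<Sum>j\<in>B. e i j * (tauE (A - {i}) * tauE (B - {j})))"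
proof -
  have "A \<union> B - {i} = (A - {i}) \<union> B" using assms by auto
  then have "(\<Sum>j\<in>A \<union> B - {i}. e i j * tauE (A \<union> B - {i, j}))
     = (\<Sum>j\<in>A - {i}. e i j * tauE (A \<union> B - {i, j})) + (\<Sum>j\<in>B. e i j * tauE (A \<union> B - {i, j}))"
    using assms by (simp add: sum.union_disjoint[of "A - {i}" B] Int_Diff disjoint_iff)
  also have "(\<Sum>j\<in>A - {i}. e i j * tauE (A \<union> B - {i, j})) = (\<Sum>j\<in>A - {i}. e i j * tauE (A - {i, j}) * tauE B)"
  proof (rule sum.cong[OF refl])
    fix j assume "j \<in> A - {i}"
    then have "A \<union> B - {i, j} = (A - {i, j}) \<union> B" using assms by auto
    moreover have "tauE ((A - {i, j}) \<union> B) = tauE (A - {i, j}) * tauE B" by (rule tau_un) (use assms in auto)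
    ultimately show "e i j * tauE (A \<union> B - {i, j}) = e i j * tauE (A - {i, j}) * tauE B"
      by (simp add: mult_ac)
  qed
  also have "(\<Sum>j\<in>B. e i j * tauE (A \<union> B - {i, j})) = (\<Sum>j\<in>B. e i j * (tauE (A - {i}) * tauE (B - {j})))"
  proof (rule sum.cong[OF refl])
    fix j assume "j \<in> B"
    then have "A \<union> B - {i, j} = (A - {i}) \<union> (B - {j})" using assms by auto
    moreover have "tauE ((A - {i}) \<union> (B - {j})) = tauE (A - {i}) * tauE (B - {j})" by (rule tau_un) (use assms in auto)
    ultimately show "e i j * tauE (A \<union> B - {i, j}) = e i j * (tauE (A - {i}) * tauE (B - {j}))"
      by simp
  qed
  finally show ?thesis by (simp add: sum_distrib_right)
qed

lemma rho_un:
  assumes "finite A" "finite B" "A \<inter> B = {}"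
  shows "rhoE (A \<union> B) = rhoE A * tauE B + tauE A * rhoE B + KE A B + KE B A"
proof -
  have "rhoE (A \<union> B) = (\<Sum>i\<in>A. \<Sum>j\<in>A \<union> B - {i}. e i j * tauE (A \<union> B - {i, j}))
      + (\<Sum>i\<in>B. \<Sum>j\<in>A \<union> B - {i}. e i j * tauE (A \<union> B - {i, j}))"
    using assms by (simp add: rhoE_def sum.union_disjoint)
  also have "(\<Sum>i\<in>A. \<Sum>j\<in>A \<union> B - {i}. e i j * tauE (A \<union> B - {i, j})) = rhoE A * tauE B + KE A B"
    using assms by (simp add: rho_inner sum.distrib rhoE_def KE_def sum_distrib_right)
  also have "(\<Sum>i\<in>B. \<Sum>j\<in>A \<union> B - {i}. e i j * tauE (A \<union> B - {i, j})) = rhoE B * tauE A + KE B A"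
  proof -
    have "A \<union> B = B \<union> A" by auto
    moreover have "B \<inter> A = {}" using assms by auto
    ultimately show ?thesis
      using assms by (simp add: rho_inner sum.distrib rhoE_def KE_def sum_distrib_right)
  qed
  finally show ?thesis by (simp add: algebra_simps)
qed

lemma XY_cross: "finite A \<Longrightarrow> finite B \<Longrightarrow> XE v A * YE v B = - (e v v * KE B A)"
proof -
  assume f: "finite A" "finite B"
  have "XE v A * YE v B = (\<Sum>j\<in>A. \<Sum>i\<in>B. (e v j * e i v) * (tauE (A - {j}) * tauE (B - {i})))"
    unfolding XE_def YE_def sum_product by (simp add: mult_ac)
  also have "\<dots> = (\<Sum>j\<in>A. \<Sum>i\<in>B. - (e v v * (e i j * (tauE (B - {i}) * tauE (A - {j})))))"
    by (intro sum.cong refl, subst e_R1[of v _ _ v]) (simp add: mult_ac)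
  also have "\<dots> = (\<Sum>i\<in>B. \<Sum>j\<in>A. - (e v v * (e i j * (tauE (B - {i}) * tauE (A - {j})))))"
    by (rule sum.swap)
  also have "\<dots> = - (e v v * KE B A)"
    by (simp add: KE_def sum_distrib_left sum_negf)
  finally show ?thesis .
qed

lemma YX_cross: "finite A \<Longrightarrow> finite B \<Longrightarrow> YE v A * XE v B = - (e v v * KE A B)"
proof -
  have "YE v A * XE v B = (\<Sum>i\<in>A. \<Sum>j\<in>B. (e i v * e v j) * (tauE (A - {i}) * tauE (B - {j})))"
    by (simp add: XE_def YE_def sum_product mult_ac)
  also have "\<dots> = (\<Sum>i\<in>A. \<Sum>j\<in>B. - (e v v * (e i j * (tauE (A - {i}) * tauE (B - {j})))))"
    by (intro sum.cong refl, subst e_R1[of _ v v]) (simp add: mult_ac)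
  also have "\<dots> = - (e v v * KE A B)"
    by (simp add: KE_def sum_distrib_left sum_negf)
  finally show ?thesis .
qed

lemma XX_zero: "XE v A * XE v B = 0"
proof -
  have "XE v A * XE v B = (\<Sum>i\<in>A. \<Sum>j\<in>B. (e v i * e v j) * (tauE (A - {i}) * tauE (B - {j})))"
    by (simp add: XE_def sum_product mult_ac)
  then show ?thesis by (simp add: e_row)
qed

lemma YY_zero: "YE v A * YE v B = 0"
proof -
  have "YE v A * YE v B = (\<Sum>i\<in>A. \<Sum>j\<in>B. (e i v * e j v) * (tauE (A - {i}) * tauE (B - {j})))"
    by (simp add: YE_def sum_product mult_ac)
  then show ?thesis by (simp add: e_col)
qed

lemma EX_zero: "e v v * XE v A = 0"
  by (simp add: XE_def sum_distrib_left mult.assoc[symmetric] e_row)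

lemma EY_zero: "e v v * YE v A = 0"
  by (simp add: YE_def sum_distrib_left mult.assoc[symmetric] e_col)

lemma EE_zero: "e v v * e v v = 0"
  by (simp add: e_row)


lemma h_mult_one:
  assumes "finite A" "finite B" "A \<inter> B = {v}"
  shows "hE c A * hE d B = hE (c + d) (A \<union> B)"
proof -
  define A' where "A' = A - {v}"
  define B' where "B' = B - {v}"
  have vA: "v \<in> A" and vB: "v \<in> B" using assms by auto
  have A: "A = insert v A'" and B: "B = insert v B'" using vA vB by (auto simp: A'_def B'_def)
  have fA: "finite A'" "v \<notin> A'" and fB: "finite B'" "v \<notin> B'" using assms by (auto simp: A'_def B'_def)
  have dis: "A' \<inter> B' = {}" using assms by (auto simp: A'_def B'_def)
  have U: "A \<union> B = insert v (A' \<union> B')" using A B by auto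
  have fU: "finite (A' \<union> B')" "v \<notin> A' \<union> B'" using fA fB by auto
  have "hE c A * hE d B = (tauE A' + e v v * hE c A' - XE v A' - YE v A') * (tauE B' + e v v * hE d B' - XE v B' - YE v B')"
    by (simp add: A B h_ins fA fB)
  also have "\<dots> = tauE A' * tauE B' + e v v * (hE d B' * tauE A' + hE c A' * tauE B' - KE A' B' - KE B' A')
     - (XE v A' * tauE B' + tauE A' * XE v B') - (YE v A' * tauE B' + tauE A' * YE v B')"
    by (rule ringA) (simp_all add: EE_zero EX_zero EY_zero XX_zero YY_zero XY_cross YX_cross fA fB)
  also have "\<dots> = hE (c + d) (A \<union> B)"
    unfolding U h_ins[OF fU] using fA fB dis
    by (simp add: tau_un sig_un rho_un X_un Y_un hE_def algebra_simps)
  finally show ?thesis .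
qed

lemma h_single: "hE c {v} = 1 - c * e v v"
  using h_ins[of "{}" v c] by (simp add: hE_def sigE_def rhoE_def XE_def YE_def)

lemma h_pair_sq:
  assumes "u \<noteq> v"
  shows "hE 0 {u, v} * hE 0 {u, v} = 0"
proof -
  have "hE 0 {u, v} = tauE {v} + e u u * hE 0 {v} - XE u {v} - YE u {v}"
    using h_ins[of "{v}" u 0] assms by simp
  also have "\<dots> = e v v + e u u - e u v - e v u"
    by (simp add: tauE_def h_single XE_def YE_def)
  finally have h: "hE 0 {u, v} = e v v + e u u - e u v - e v u" .
  show ?thesis unfolding h
    by (rule ringB) (simp_all add: e_row e_col e_R1[of u v v u] mult.commute[of "e u u"])
qed

lemma h_mult_two:
  assumes "finite A" "finite B" "u \<in> A" "v \<in> A" "u \<in> B" "v \<in> B" "u \<noteq> v"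
  shows "hE c A * hE d B = 0"
proof -
  have "hE c A = hE (0 + c) ({u, v} \<union> (A - {u}))"
    using assms by (simp add: insert_absorb)
  also have "\<dots> = hE 0 {u, v} * hE c (A - {u})"
    by (rule h_mult_one[symmetric]) (use assms in auto)
  finally have a: "hE c A = hE 0 {u, v} * hE c (A - {u})" .
  have "hE d B = hE (0 + d) ({u, v} \<union> (B - {u}))"
    using assms by (simp add: insert_absorb)
  also have "\<dots> = hE 0 {u, v} * hE d (B - {u})"
    by (rule h_mult_one[symmetric]) (use assms in auto)
  finally have b: "hE d B = hE 0 {u, v} * hE d (B - {u})" .
  have "hE c A * hE d B = (hE 0 {u, v} * hE 0 {u, v}) * (hE c (A - {u}) * hE d (B - {u}))"
    unfolding a b by (simp add: mult_ac)
  then show ?thesis using h_pair_sq[OF assms(7)] by simp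
qed



lemma rep_e: "rep (e i j) = psibar i \<odot> psi j"
  by (rule e.rep_eq)

lemma tau_rep: "tau A = rep (tauE A)"
proof (cases "finite A")
  case True
  have "tauE A = prod_list (map (\<lambda>k. e k k) (sorted_list_of_set A))"
    using prod.distinct_set_conv_list[of "sorted_list_of_set A" "\<lambda>k. e k k"] True by (simp add: tauE_def)
  then show ?thesis
    by (simp add: tau_def gprod_list_def rep_prod_list comp_def rep_e)
next
  case False
  then show ?thesis by (simp add: tau_def gprod_list_def tauE_def one_ev.rep_eq)
qed

lemma rep_uminus: "rep (- x) = - rep x" by (rule uminus_ev.rep_eq)
lemma rep_plus: "rep (x + y) = rep x + rep y" by (rule plus_ev.rep_eq)
lemma rep_minus: "rep (x - y) = rep x - rep y" by (rule minus_ev.rep_eq)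

lemma fA_rep: "fA lam A = rep (hE (cs (lam * (real (card A) - 1))) A)"
proof -
  have 1: "- rep (cs (lam * (real (card A) - 1)) * tauE A) = gscale (lam * (1 - real (card A))) (tau A)"
    unfolding rep_cs_mult tau_rep by (simp add: gscale_def fun_eq_iff algebra_simps)
  have 2: "rep (sigE A) = (\<Sum>i\<in>A. tau (A - {i}))"
    by (simp add: sigE_def rep_sum tau_rep)
  have 3: "rep (rhoE A) = (\<Sum>i\<in>A. \<Sum>j\<in>A - {i}. psibar i \<odot> psi j \<odot> tau (A - {i, j}))"
    by (simp add: rhoE_def rep_sum rep_times rep_e tau_rep)
  show ?thesis
    unfolding hE_def rep_plus rep_minus rep_uminus 1 2 3 fA_def ..
qed

lemma gprod_set_rep:
  assumes "finite S" "\<And>C. C \<in> S \<Longrightarrow> f C = rep (g C)"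
  shows "gprod_set S f = rep (\<Prod>C\<in>S. g C)"
proof -
  define xs where "xs = (SOME xs. distinct xs \<and> set xs = S)"
  have "\<exists>xs. distinct xs \<and> set xs = S" using assms(1) finite_distinct_list by blast
  then have xs: "distinct xs" "set xs = S" unfolding xs_def by (metis (mono_tags, lifting) someI_ex)+
  have "(\<Prod>C\<in>S. g C) = prod_list (map g xs)"
    using xs prod.distinct_set_conv_list[of xs g] by simp
  then have "rep (\<Prod>C\<in>S. g C) = foldr gmul (map (rep \<circ> g) xs) gone"
    by (simp add: rep_prod_list)
  also have "map (rep \<circ> g) xs = map f xs"
    using assms(2) xs by (auto intro!: map_cong)
  finally show ?thesis by (simp add: gprod_set_def gprod_list_def xs_def)
qed

lemma gpow_rep: "gpow (rep s) n = rep (s ^ n)"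
  by (induction n) (simp_all add: one_ev.rep_eq rep_times)

definition lowG :: "('a \<times> bool) set \<Rightarrow> nat \<Rightarrow> 'a::linorder ev \<Rightarrow> bool" where
  "lowG G k s \<longleftrightarrow> (\<forall>S. rep s S \<noteq> 0 \<longrightarrow> S \<subseteq> G \<and> k \<le> card S)"

lemma lowG_mult:
  assumes "finite G" "lowG G a x" "lowG G b y"
  shows "lowG G (a + b) (x * y)"
  unfolding lowG_def
proof (intro allI impI)
  fix S assume nz: "rep (x * y) S \<noteq> 0"
  then have fin: "finite S" by (auto simp: rep_times gmul_def split: if_splits)
  then have "(\<Sum>T\<in>Pow S. gsign T (S - T) * rep x T * rep y (S - T)) \<noteq> 0"
    using nz by (simp add: rep_times gmul_def)
  then obtain T where T0: "T \<in> Pow S" "gsign T (S - T) * rep x T * rep y (S - T) \<noteq> 0"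
    by (meson sum.neutral)
  then have T: "T \<subseteq> S" "rep x T \<noteq> 0" "rep y (S - T) \<noteq> 0" by auto
  then have "T \<subseteq> G" "a \<le> card T" "S - T \<subseteq> G" "b \<le> card (S - T)"
    using assms unfolding lowG_def by blast+
  moreover have "card S = card T + card (S - T)"
    using T(1) fin by (metis card_Diff_subset card_mono finite_subset le_add_diff_inverse)
  ultimately show "S \<subseteq> G \<and> a + b \<le> card S" by auto
qed

lemma lowG_mono: "lowG G k x \<Longrightarrow> j \<le> k \<Longrightarrow> lowG G j x"
  by (auto simp: lowG_def)
lemma lowG_zero: "lowG G k 0"
  by (simp add: lowG_def zero_ev.rep_eq)
lemma lowG_one: "lowG G 0 1"
  by (simp add: lowG_def one_ev.rep_eq gone_def)
lemma lowG_add: "lowG G k x \<Longrightarrow> lowG G k y \<Longrightarrow> lowG G k (x + y)"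
  unfolding lowG_def rep_plus plus_fun_apply by (metis add.left_neutral add.right_neutral)
lemma lowG_uminus: "lowG G k x \<Longrightarrow> lowG G k (- x)"
  by (auto simp: lowG_def rep_uminus)
lemma lowG_diff: "lowG G k x \<Longrightarrow> lowG G k y \<Longrightarrow> lowG G k (x - y)"
  unfolding lowG_def rep_minus minus_apply by (metis diff_zero diff_self)
lemma lowG_cs: "lowG G k x \<Longrightarrow> lowG G k (cs c * x)"
  by (auto simp: lowG_def rep_cs_mult gscale_def)
lemma lowG_sum: "(\<And>i. i \<in> I \<Longrightarrow> lowG G k (f i)) \<Longrightarrow> lowG G k (\<Sum>i\<in>I. f i)"
proof (induction I rule: infinite_finite_induct)
  case (infinite A) then show ?case by (simp add: lowG_zero)
next
  case empty then show ?case by (simp add: lowG_zero)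
next
  case (insert x F) then show ?case by (simp add: lowG_add)
qed
lemma lowG_pow: "finite G \<Longrightarrow> lowG G 1 x \<Longrightarrow> lowG G n (x ^ n)"
proof (induction n)
  case 0 then show ?case by (simp add: lowG_one)
next
  case (Suc n) then show ?case using lowG_mult[of G 1 x n "x ^ n"] by simp
qed
lemma lowG_big:
  assumes "finite G" "lowG G k x" "card G < k"
  shows "x = 0"
proof -
  have "rep x S = 0" for S
  proof (rule ccontr)
    assume "rep x S \<noteq> 0"
    then have "S \<subseteq> G" "k \<le> card S" using assms(2) unfolding lowG_def by blast+
    then have "k \<le> card G" using card_mono[OF assms(1)] by (meson le_trans)
    then show False using assms(3) by simp
  qed
  then have "rep x = rep 0" by (simp add: zero_ev.rep_eq fun_eq_iff)
  then show ?thesis by (simp add: rep_inject)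
qed

lemma lowG_e: "(i, False) \<in> G \<Longrightarrow> (j, True) \<in> G \<Longrightarrow> lowG G 2 (e i j)"
  unfolding lowG_def rep_e psibar_def psi_def gen_gmul_gen
proof (intro allI impI)
  fix S assume a: "(i, False) \<in> G" "(j, True) \<in> G"
    and "(if (i, False) \<noteq> (j, True) \<and> S = {(i, False), (j, True)} then if (j, True) < (i, False) then - 1 else 1 else 0) \<noteq> (0::real)"
  then have "S = {(i, False), (j, True)}" by (simp split: if_splits)
  then show "S \<subseteq> G \<and> 2 \<le> card S" using a by simp
qed



definition ex :: "nat \<Rightarrow> 'a::linorder ev \<Rightarrow> 'a ev" where
  "ex N s = (\<Sum>n\<le>N. cs (1 / fact n) * s ^ n)"

lemma pow_sq0:
  fixes s y :: "'a::comm_ring_1"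
  assumes "y * y = 0"
  shows "(s + y) ^ Suc n = s ^ Suc n + of_nat (Suc n) * y * s ^ n"
proof (induction n)
  case 0 then show ?case by simp
next
  case (Suc n)
  have "(s + y) ^ Suc (Suc n) = (s + y) * (s ^ Suc n + of_nat (Suc n) * y * s ^ n)"
    using Suc by simp
  also have "\<dots> = s ^ Suc (Suc n) + of_nat (Suc n) * y * s ^ Suc n + y * s ^ Suc n + of_nat (Suc n) * (y * y) * s ^ n"
    by (simp add: algebra_simps)
  also have "\<dots> = s ^ Suc (Suc n) + of_nat (Suc (Suc n)) * y * s ^ Suc n"
    using assms by (simp add: algebra_simps)
  finally show ?case .
qed

lemma ex_add:
  assumes "y * y = 0" "s ^ N = 0"
  shows "ex N (s + y) = (1 + y) * ex N s"
proof (cases N)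
  case 0
  then have "(1::'a ev) = 0" using assms by simp
  then show ?thesis by simp
next
  case (Suc M)
  have c: "cs (1 / fact (Suc i)) * of_nat (Suc i) = cs (1 / fact i)" for i
  proof -
    have "fact (Suc i) = real (Suc i) * fact i" by simp
    moreover have "(fact i :: real) > 0" by simp
    moreover have "0 < (fact i::real) + fact i * real i" by (simp add: add_pos_nonneg)
    ultimately have "1 / fact (Suc i) * real (Suc i) = (1 / fact i :: real)"
      by (simp add: field_simps)
    then show ?thesis by (metis cs_mult cs_of_nat)
  qed
  have "ex N (s + y) = 1 + (\<Sum>i\<le>M. cs (1 / fact (Suc i)) * (s ^ Suc i + of_nat (Suc i) * y * s ^ i))"
    unfolding ex_def Suc sum.atMost_Suc_shift using pow_sq0[OF assms(1)] by simp
  also have "\<dots> = 1 + (\<Sum>i\<le>M. cs (1 / fact (Suc i)) * s ^ Suc i) + y * (\<Sum>i\<le>M. (cs (1 / fact (Suc i)) * of_nat (Suc i)) * s ^ i)"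
    by (simp add: algebra_simps sum.distrib sum_distrib_left)
  also have "\<dots> = ex N s + y * ex M s"
    unfolding c ex_def Suc sum.atMost_Suc_shift by simp
  finally have *: "ex N (s + y) = ex N s + y * ex M s" .
  have "ex N s = ex M s"
    using assms(2) unfolding ex_def Suc by simp
  then show ?thesis using * by (simp add: algebra_simps)
qed

lemma sum_trunc:
  fixes f :: "nat \<Rightarrow> real"
  assumes "\<And>n. f n \<noteq> 0 \<Longrightarrow> n \<le> a \<and> n \<le> b"
  shows "(\<Sum>n\<le>a. f n) = (\<Sum>n\<le>b. f n)"
proof -
  have "(\<Sum>n\<le>a. f n) = (\<Sum>n\<le>min a b. f n)"
    by (rule sum.mono_neutral_right) (use assms in auto)
  also have "\<dots> = (\<Sum>n\<le>b. f n)"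
    by (rule sum.mono_neutral_left) (use assms in auto)
  finally show ?thesis .
qed

lemma gexp_rep:
  assumes G: "finite G" and low: "lowG G 1 s" and N: "card G \<le> N"
  shows "gexp (rep s) = rep (ex N s)"
proof (rule ext)
  fix S
  have z: "rep s {} = 0" using low by (auto simp: lowG_def)
  have r: "rep s - gscale 0 gone = rep s"
    by (simp add: z gscale_def fun_eq_iff)
  have "gexp (rep s) S = (\<Sum>n\<le>card S. rep (s ^ n) S / fact n)"
    unfolding gexp_def z r gpow_rep[symmetric] by simp
  also have "\<dots> = (\<Sum>n\<le>N. rep (s ^ n) S / fact n)"
  proof (rule sum_trunc)
    fix n assume "rep (s ^ n) S / fact n \<noteq> 0"
    then have "rep (s ^ n) S \<noteq> 0" by simp
    moreover have "lowG G n (s ^ n)" using lowG_pow[OF G low] .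
    ultimately have "S \<subseteq> G" "n \<le> card S" unfolding lowG_def by blast+
    moreover have "card S \<le> card G" using card_mono[OF G] \<open>S \<subseteq> G\<close> .
    ultimately show "n \<le> card S \<and> n \<le> N" using N by simp
  qed
  also have "\<dots> = rep (ex N s) S"
    by (simp add: ex_def rep_sum sum_fun_apply rep_cs_mult gscale_def)
  finally show "gexp (rep s) S = rep (ex N s) S" .
qed



definition adj :: "'v set set \<Rightarrow> ('v \<times> 'v) set" where
  "adj F = {(x, y). \<exists>A\<in>F. x \<in> A \<and> y \<in> A}"

lemma hconn_adj: "hconn F = (adj F)\<^sup>*"
  by (simp add: hconn_def adj_def)

lemma sym_adj: "sym (adj F)"
  by (auto simp: sym_def adj_def)

lemma hconn_sym: "(x, y) \<in> hconn F \<Longrightarrow> (y, x) \<in> hconn F"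
  unfolding hconn_adj by (metis sym_adj sym_rtrancl symD)

lemma hconn_trans: "(x, y) \<in> hconn F \<Longrightarrow> (y, z) \<in> hconn F \<Longrightarrow> (x, z) \<in> hconn F"
  unfolding hconn_adj by (rule rtrancl_trans)

lemma hconn_refl[simp]: "(x, x) \<in> hconn F"
  unfolding hconn_adj by simp

lemma hconn_edge: "A \<in> F \<Longrightarrow> x \<in> A \<Longrightarrow> y \<in> A \<Longrightarrow> (x, y) \<in> hconn F"
  unfolding hconn_adj adj_def by auto

lemma hconn_mono: "F \<subseteq> F' \<Longrightarrow> (x, y) \<in> hconn F \<Longrightarrow> (x, y) \<in> hconn F'"
  unfolding hconn_adj adj_def by (erule rtrancl_mono[THEN subsetD, rotated]) auto

lemma hconn_insert:
  "(x, y) \<in> hconn (insert B F) \<longleftrightarrow>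
     (x, y) \<in> hconn F \<or> (\<exists>b1\<in>B. \<exists>b2\<in>B. (x, b1) \<in> hconn F \<and> (b2, y) \<in> hconn F)"
proof
  assume "(x, y) \<in> hconn (insert B F)"
  then have "(x, y) \<in> (adj (insert B F))\<^sup>*" by (simp add: hconn_adj)
  then show "(x, y) \<in> hconn F \<or> (\<exists>b1\<in>B. \<exists>b2\<in>B. (x, b1) \<in> hconn F \<and> (b2, y) \<in> hconn F)"
  proof (induction rule: rtrancl_induct)
    case base then show ?case by simp
  next
    case (step y z)
    from step.hyps(2) obtain A where A: "A \<in> insert B F" "y \<in> A" "z \<in> A" by (auto simp: adj_def)
    show ?case
    proof (cases "A \<in> F")
      case True
      then have yz: "(y, z) \<in> hconn F" using A by (simp add: hconn_edge)
      from step.IH show ?thesis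
      proof
        assume "(x, y) \<in> hconn F"
        then have "(x, z) \<in> hconn F" using yz by (rule hconn_trans)
        then show ?thesis by simp
      next
        assume "\<exists>b1\<in>B. \<exists>b2\<in>B. (x, b1) \<in> hconn F \<and> (b2, y) \<in> hconn F"
        then obtain b1 b2 where "b1 \<in> B" "b2 \<in> B" "(x, b1) \<in> hconn F" "(b2, y) \<in> hconn F" by blast
        moreover have "(b2, z) \<in> hconn F" using \<open>(b2, y) \<in> hconn F\<close> yz by (rule hconn_trans)
        ultimately show ?thesis by blast
      qed
    next
      case False
      then have AB: "A = B" using A by simp
      from step.IH show ?thesis
      proof
        assume "(x, y) \<in> hconn F"
        moreover have "(z, z) \<in> hconn F" by simp
        ultimately show ?thesis using A AB by blast
      next
        assume "\<exists>b1\<in>B. \<exists>b2\<in>B. (x, b1) \<in> hconn F \<and> (b2, y) \<in> hconn F"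
        then obtain b1 where "b1 \<in> B" "(x, b1) \<in> hconn F" by blast
        moreover have "(z, z) \<in> hconn F" by simp
        ultimately show ?thesis using A AB by blast
      qed
    qed
  qed
next
  assume "(x, y) \<in> hconn F \<or> (\<exists>b1\<in>B. \<exists>b2\<in>B. (x, b1) \<in> hconn F \<and> (b2, y) \<in> hconn F)"
  then show "(x, y) \<in> hconn (insert B F)"
  proof
    assume "(x, y) \<in> hconn F" then show ?thesis by (rule hconn_mono[rotated]) auto
  next
    assume "\<exists>b1\<in>B. \<exists>b2\<in>B. (x, b1) \<in> hconn F \<and> (b2, y) \<in> hconn F"
    then obtain b1 b2 where b: "b1 \<in> B" "b2 \<in> B" "(x, b1) \<in> hconn F" "(b2, y) \<in> hconn F" by blast
    have "(x, b1) \<in> hconn (insert B F)" "(b2, y) \<in> hconn (insert B F)"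
      using b by (auto intro: hconn_mono[rotated])
    moreover have "(b1, b2) \<in> hconn (insert B F)" using b by (auto intro: hconn_edge)
    ultimately show ?thesis by (meson hconn_trans)
  qed
qed

lemma hconn_in_V:
  assumes "\<forall>A\<in>F. A \<subseteq> V" "(x, y) \<in> hconn F" "x \<in> V"
  shows "y \<in> V"
proof -
  have "(x, y) \<in> (adj F)\<^sup>*" using assms(2) by (simp add: hconn_adj)
  then show ?thesis
    by (induction rule: rtrancl_induct) (use assms in \<open>auto simp: adj_def\<close>)
qed

definition cls :: "'v set set \<Rightarrow> 'v \<Rightarrow> 'v set" where
  "cls F x = {y. (x, y) \<in> hconn F}"

lemma components_cls: "components V F = cls F ` V"
  by (auto simp: components_def quotient_def cls_def Image_def)

lemma cls_self: "x \<in> cls F x"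
  by (simp add: cls_def)

lemma cls_eq:
  assumes "(x, y) \<in> hconn F"
  shows "cls F x = cls F y"
proof -
  have "(x, z) \<in> hconn F \<longleftrightarrow> (y, z) \<in> hconn F" for z
    using assms hconn_sym hconn_trans by meson
  then show ?thesis by (simp add: cls_def)
qed

lemma cls_disj:
  assumes "z \<in> cls F x" "z \<in> cls F y"
  shows "cls F x = cls F y"
proof -
  have "(x, z) \<in> hconn F" "(y, z) \<in> hconn F" using assms by (simp_all add: cls_def)
  then have "(x, y) \<in> hconn F" using hconn_sym hconn_trans by meson
  then show ?thesis by (rule cls_eq)
qed

lemma cls_sub_V: "\<forall>A\<in>F. A \<subseteq> V \<Longrightarrow> x \<in> V \<Longrightarrow> cls F x \<subseteq> V"
proof
  fix y assume "\<forall>A\<in>F. A \<subseteq> V" "x \<in> V" "y \<in> cls F x"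
  then show "y \<in> V" using hconn_in_V[of F V x y] by (simp add: cls_def)
qed

lemma components_insert:
  assumes FV: "\<forall>A\<in>F. A \<subseteq> V" and BV: "B \<subseteq> V" and Bne: "B \<noteq> {}"
  defines "Cs \<equiv> {C \<in> components V F. C \<inter> B \<noteq> {}}"
  shows "components V (insert B F) = insert (\<Union>Cs) (components V F - Cs)"
proof -
  have UCs: "\<Union>Cs = {y. \<exists>b\<in>B. (b, y) \<in> hconn F}"
  proof
    show "\<Union>Cs \<subseteq> {y. \<exists>b\<in>B. (b, y) \<in> hconn F}"
    proof
      fix y assume "y \<in> \<Union>Cs"
      then obtain x b where "x \<in> V" "y \<in> cls F x" "b \<in> cls F x" "b \<in> B"
        by (auto simp: Cs_def components_cls)
      then have "(x, y) \<in> hconn F" "(x, b) \<in> hconn F" "b \<in> B" by (simp_all add: cls_def)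
      then have "(b, y) \<in> hconn F" "b \<in> B" by (meson hconn_sym hconn_trans)+
      then show "y \<in> {y. \<exists>b\<in>B. (b, y) \<in> hconn F}" by blast
    qed
    show "{y. \<exists>b\<in>B. (b, y) \<in> hconn F} \<subseteq> \<Union>Cs"
    proof
      fix y assume "y \<in> {y. \<exists>b\<in>B. (b, y) \<in> hconn F}"
      then obtain b where b: "b \<in> B" "(b, y) \<in> hconn F" by auto
      then have "cls F b \<in> Cs" using BV cls_self[of b F] by (auto simp: Cs_def components_cls)
      moreover have "y \<in> cls F b" using b by (simp add: cls_def)
      ultimately show "y \<in> \<Union>Cs" by blast
    qed
  qed
  have new: "cls (insert B F) x = (if \<exists>b\<in>B. (x, b) \<in> hconn F then \<Union>Cs else cls F x)" for x
  proof (cases "\<exists>b\<in>B. (x, b) \<in> hconn F")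
    case True
    then obtain b1 where b1: "b1 \<in> B" "(x, b1) \<in> hconn F" by blast
    have "(x, y) \<in> hconn (insert B F) \<longleftrightarrow> (\<exists>b\<in>B. (b, y) \<in> hconn F)" for y
    proof
      assume "(x, y) \<in> hconn (insert B F)"
      then show "\<exists>b\<in>B. (b, y) \<in> hconn F" unfolding hconn_insert
      proof
        assume "(x, y) \<in> hconn F"
        then have "(b1, y) \<in> hconn F" using b1 by (meson hconn_sym hconn_trans)
        then show ?thesis using b1 by blast
      qed blast
    next
      assume "\<exists>b\<in>B. (b, y) \<in> hconn F"
      then show "(x, y) \<in> hconn (insert B F)" unfolding hconn_insert using b1 by blast
    qed
    then have "cls (insert B F) x = \<Union>Cs"
      unfolding UCs cls_def by blast
    then show ?thesis using True by simp
  next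
    case False
    then show ?thesis unfolding cls_def hconn_insert by auto
  qed
  show ?thesis
  proof
    show "components V (insert B F) \<subseteq> insert (\<Union>Cs) (components V F - Cs)"
    proof
      fix C assume "C \<in> components V (insert B F)"
      then obtain x where x: "x \<in> V" "C = cls (insert B F) x" by (auto simp: components_cls)
      show "C \<in> insert (\<Union>Cs) (components V F - Cs)"
      proof (cases "\<exists>b\<in>B. (x, b) \<in> hconn F")
        case True then show ?thesis using x new by simp
      next
        case False
        then have "cls F x \<inter> B = {}" by (auto simp: cls_def)
        then show ?thesis using x new False by (auto simp: Cs_def components_cls)
      qed
    qed
    show "insert (\<Union>Cs) (components V F - Cs) \<subseteq> components V (insert B F)"
    proof
      fix C assume C: "C \<in> insert (\<Union>Cs) (components V F - Cs)"
      show "C \<in> components V (insert B F)"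
      proof (cases "C = \<Union>Cs")
        case True
        obtain b where b: "b \<in> B" using Bne by auto
        then have "cls (insert B F) b = \<Union>Cs" using new[of b] by auto
        then show ?thesis using True b BV by (auto simp: components_cls)
      next
        case False
        then obtain x where x: "x \<in> V" "C = cls F x" "cls F x \<inter> B = {}"
          using C by (auto simp: Cs_def components_cls)
        then have "\<not> (\<exists>b\<in>B. (x, b) \<in> hconn F)" by (auto simp: cls_def)
        then have "cls (insert B F) x = C" using new[of x] x by simp
        then show ?thesis using x by (auto simp: components_cls)
      qed
    qed
  qed
qed


definition spath :: "'v set set \<Rightarrow> 'v list \<Rightarrow> 'v set list \<Rightarrow> bool" where
  "spath F vs es \<longleftrightarrow> length vs = Suc (length es) \<and> distinct vs \<and> distinct es \<and> set es \<subseteq> F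
     \<and> (\<forall>t<length es. vs ! t \<in> es ! t \<and> vs ! Suc t \<in> es ! t)"

lemma spath_exists:
  assumes "(x, y) \<in> hconn F"
  shows "\<exists>vs es. spath F vs es \<and> vs ! 0 = x \<and> vs ! length es = y"
proof -
  have "(x, y) \<in> (adj F)\<^sup>*" using assms by (simp add: hconn_adj)
  then show ?thesis
  proof (induction rule: rtrancl_induct)
    case base
    have "spath F [x] []" by (simp add: spath_def)
    then show ?case by (intro exI[of _ "[x]"] exI[of _ "[]"]) simp
  next
    case (step y z)
    from step.IH obtain vs es where P: "spath F vs es" "vs ! 0 = x" "vs ! length es = y" by blast
    from step.hyps(2) obtain A where A: "A \<in> F" "y \<in> A" "z \<in> A" by (auto simp: adj_def)
    have len: "length vs = Suc (length es)" and dv: "distinct vs" and de: "distinct es"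
      and se: "set es \<subseteq> F" and ed: "\<And>t. t < length es \<Longrightarrow> vs ! t \<in> es ! t \<and> vs ! Suc t \<in> es ! t"
      using P(1) by (auto simp: spath_def)
    show ?case
    proof (cases "z \<in> set vs")
      case True
      then obtain p where p: "p < length vs" "vs ! p = z" by (auto simp: in_set_conv_nth)
      let ?vs = "take (Suc p) vs" and ?es = "take p es"
      have pl: "p \<le> length es" using p len by simp
      have l1: "length ?vs = Suc (length ?es)" using p pl by simp
      have l2: "distinct ?vs" using dv by simp
      have l3: "distinct ?es" using de by simp
      have l4: "set ?es \<subseteq> F" using se set_take_subset by fastforce
      have l5: "\<forall>t<length ?es. ?vs ! t \<in> ?es ! t \<and> ?vs ! Suc t \<in> ?es ! t"
      proof (intro allI impI)
        fix t assume t: "t < length ?es"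
        then have "t < p" "t < length es" using pl by auto
        then show "?vs ! t \<in> ?es ! t \<and> ?vs ! Suc t \<in> ?es ! t" using ed[of t] by simp
      qed
      have "spath F ?vs ?es" unfolding spath_def using l1 l2 l3 l4 l5 by blast
      moreover have "?vs ! 0 = x" using P(2) by simp
      moreover have "?vs ! length ?es = z"
      proof -
        have "p \<le> length es" using p len by simp
        then show ?thesis using p by (simp add: min_def)
      qed
      ultimately show ?thesis by (intro exI[of _ ?vs] exI[of _ ?es]) blast
    next
      case znot: False
      show ?thesis
      proof (cases "A \<in> set es")
        case True
        then obtain q where q: "q < length es" "es ! q = A" by (auto simp: in_set_conv_nth)
        let ?vs = "take (Suc q) vs @ [z]" and ?es = "take (Suc q) es"
        have lv: "length ?vs = Suc (Suc q)" and le: "length ?es = Suc q" using q len by auto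
        have "\<forall>t<length ?es. ?vs ! t \<in> ?es ! t \<and> ?vs ! Suc t \<in> ?es ! t"
        proof (intro allI impI)
          fix t assume t: "t < length ?es"
          show "?vs ! t \<in> ?es ! t \<and> ?vs ! Suc t \<in> ?es ! t"
          proof (cases "t < q")
            case True
            then show ?thesis using ed[of t] q len by (simp add: nth_append)
          next
            case False
            then have tq: "t = q" using t le by simp
            have "?vs ! t = vs ! q" using tq q len by (simp add: nth_append)
            moreover have "?vs ! Suc t = z" using tq q len by (simp add: nth_append)
            moreover have "?es ! t = A" using tq q by simp
            ultimately show ?thesis using ed[of q] q A by simp
          qed
        qed
        moreover have "distinct ?vs" using dv znot by (auto dest: in_set_takeD)
        moreover have "distinct ?es" using de by simp
        moreover have "set ?es \<subseteq> F" using se set_take_subset by fastforce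
        moreover have "length ?vs = Suc (length ?es)" using lv le by simp
        ultimately have "spath F ?vs ?es"
          unfolding spath_def by blast
        moreover have "?vs ! 0 = x" using P(2) len by (simp add: nth_append)
        moreover have "?vs ! length ?es = z" using le lv by (simp add: nth_append)
        ultimately show ?thesis by (intro exI[of _ ?vs] exI[of _ ?es]) blast
      next
        case Anot: False
        let ?vs = "vs @ [z]" and ?es = "es @ [A]"
        have "\<forall>t<length ?es. ?vs ! t \<in> ?es ! t \<and> ?vs ! Suc t \<in> ?es ! t"
        proof (intro allI impI)
          fix t assume t: "t < length ?es"
          show "?vs ! t \<in> ?es ! t \<and> ?vs ! Suc t \<in> ?es ! t"
          proof (cases "t < length es")
            case True
            then show ?thesis using ed[of t] len by (simp add: nth_append)
          next
            case False
            then have tq: "t = length es" using t by simp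
            then show ?thesis using len P(3) A by (simp add: nth_append)
          qed
        qed
        moreover have "distinct ?vs" using dv znot by simp
        moreover have "distinct ?es" using de Anot by simp
        moreover have "set ?es \<subseteq> F" using se A by simp
        moreover have "length ?vs = Suc (length ?es)" using len by simp
        ultimately have "spath F ?vs ?es"
          unfolding spath_def by blast
        moreover have "?vs ! 0 = x" using P(2) len by (simp add: nth_append)
        moreover have "?vs ! length ?es = z" using len by (simp add: nth_append)
        ultimately show ?thesis by (intro exI[of _ ?vs] exI[of _ ?es]) blast
      qed
    qed
  qed
qed

lemma cycle_from_path:
  assumes "(x, y) \<in> hconn F" "x \<noteq> y" "x \<in> B" "y \<in> B" "B \<notin> F"
  shows "\<not> hyperforest (insert B F)"
proof -
  obtain vs es where P: "spath F vs es" "vs ! 0 = x" "vs ! length es = y"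
    using spath_exists[OF assms(1)] by blast
  have len: "length vs = Suc (length es)" and dv: "distinct vs" and de: "distinct es"
    and se: "set es \<subseteq> F" and ed: "\<And>t. t < length es \<Longrightarrow> vs ! t \<in> es ! t \<and> vs ! Suc t \<in> es ! t"
    using P(1) by (auto simp: spath_def)
  have ne: "length es \<noteq> 0" using P(2,3) assms(2) by auto
  have cyc: "\<forall>i<length vs. vs ! i \<in> (es @ [B]) ! i \<and> vs ! ((i + 1) mod length vs) \<in> (es @ [B]) ! i"
  proof (intro allI impI)
    fix i assume i: "i < length vs"
    show "vs ! i \<in> (es @ [B]) ! i \<and> vs ! ((i + 1) mod length vs) \<in> (es @ [B]) ! i"
    proof (cases "i < length es")
      case True
      then have "(i + 1) mod length vs = Suc i" using len by simp
      then show ?thesis using ed[OF True] True by (simp add: nth_append)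
    next
      case False
      then have ie: "i = length es" using i len by simp
      then have "(i + 1) mod length vs = 0" using len by simp
      then show ?thesis using ie P(2,3) assms(3,4) by (simp add: nth_append)
    qed
  qed
  have "2 \<le> length vs" using len ne by (cases es) auto
  moreover have "distinct (es @ [B])" using de se assms(5) by auto
  moreover have "set (es @ [B]) \<subseteq> insert B F" using se by auto
  ultimately have "hcycle (insert B F) vs (es @ [B])"
    unfolding hcycle_def using len dv cyc by simp
  then show ?thesis by (auto simp: hyperforest_def)
qed

lemma mod_ne:
  fixes i d k :: nat
  assumes "i < k" "0 < d" "d < k"
  shows "(i + d) mod k \<noteq> i"
proof (cases "i + d < k")
  case True then show ?thesis using assms by simp
next
  case False
  then have "(i + d) mod k = i + d - k" using assms by (simp add: le_mod_geq)
  then show ?thesis using assms False by linarith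
qed

lemma path_from_cycle:
  assumes "hyperforest F" "\<not> hyperforest (insert B F)"
  shows "\<exists>x\<in>B. \<exists>y\<in>B. x \<noteq> y \<and> (x, y) \<in> hconn F"
proof -
  obtain xs es where C: "hcycle (insert B F) xs es" using assms(2) by (auto simp: hyperforest_def)
  define k where "k = length xs"
  have len: "length es = k" and k2: "2 \<le> k" and dx: "distinct xs" and de: "distinct es"
    and se: "set es \<subseteq> insert B F"
    and ed: "\<And>i. i < k \<Longrightarrow> xs ! i \<in> es ! i \<and> xs ! ((i + 1) mod k) \<in> es ! i"
    using C by (auto simp: hcycle_def k_def)
  have "B \<in> set es"
  proof (rule ccontr)
    assume "B \<notin> set es"
    then have "hcycle F xs es" using C by (auto simp: hcycle_def)
    then show False using assms(1) by (auto simp: hyperforest_def)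
  qed
  then obtain i where i: "i < k" "es ! i = B" using len by (auto simp: in_set_conv_nth)
  define a where "a = xs ! i"
  define b where "b = xs ! ((i + 1) mod k)"
  have aB: "a \<in> B" and bB: "b \<in> B" using ed[OF i(1)] i by (auto simp: a_def b_def)
  have "(i + 1) mod k \<noteq> i" using mod_ne[of i k 1] i k2 by simp
  moreover have "(i + 1) mod k < k" using k2 by simp
  ultimately have ab: "a \<noteq> b" using dx i nth_eq_iff_index_eq[of xs i "(i + 1) mod k"]
    by (simp add: a_def b_def k_def)
  have walk: "j < k \<Longrightarrow> (b, xs ! ((i + 1 + j) mod k)) \<in> hconn F" for j
  proof (induction j)
    case 0 then show ?case by (simp add: b_def)
  next
    case (Suc j)
    define l where "l = (i + 1 + j) mod k"
    have lk: "l < k" using k2 by (simp add: l_def)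
    have "l \<noteq> i" unfolding l_def using mod_ne[of i k "Suc j"] i Suc.prems by (simp add: add.assoc)
    then have "es ! l \<noteq> B" using de i lk len nth_eq_iff_index_eq[of es l i] by simp
    moreover have "es ! l \<in> set es" using lk len by simp
    ultimately have "es ! l \<in> F" using se by blast
    moreover have "xs ! l \<in> es ! l" "xs ! ((l + 1) mod k) \<in> es ! l" using ed[OF lk] by simp_all
    moreover have "(l + 1) mod k = (i + 1 + Suc j) mod k"
    proof -
      have "(l + 1) mod k = (i + 1 + j + 1) mod k" unfolding l_def by (rule mod_add_left_eq)
      also have "i + 1 + j + 1 = i + 1 + Suc j" by simp
      finally show ?thesis .
    qed
    ultimately have "(xs ! l, xs ! ((i + 1 + Suc j) mod k)) \<in> hconn F"
      using hconn_edge[of "es ! l" F "xs ! l" "xs ! ((l + 1) mod k)"] by simp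
    moreover have "(b, xs ! l) \<in> hconn F" using Suc.IH Suc.prems unfolding l_def by simp
    ultimately show ?case by (rule hconn_trans[rotated])
  qed
  have "i + 1 + (k - 1) = i + k" using k2 by simp
  then have "(i + 1 + (k - 1)) mod k = i" using i by simp
  then have "(b, a) \<in> hconn F" using walk[of "k - 1"] k2 by (simp add: a_def)
  then have "(a, b) \<in> hconn F" by (rule hconn_sym)
  then show ?thesis using aB bB ab by blast
qed

lemma forest_insert_iff:
  assumes "hyperforest F" "B \<notin> F"
  shows "hyperforest (insert B F) \<longleftrightarrow> (\<forall>x\<in>B. \<forall>y\<in>B. (x, y) \<in> hconn F \<longrightarrow> x = y)"
proof
  assume "hyperforest (insert B F)"
  then show "\<forall>x\<in>B. \<forall>y\<in>B. (x, y) \<in> hconn F \<longrightarrow> x = y"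
    using cycle_from_path[OF _ _ _ _ assms(2)] by blast
next
  assume a: "\<forall>x\<in>B. \<forall>y\<in>B. (x, y) \<in> hconn F \<longrightarrow> x = y"
  show "hyperforest (insert B F)"
  proof (rule ccontr)
    assume "\<not> hyperforest (insert B F)"
    then obtain x y where "x \<in> B" "y \<in> B" "x \<noteq> y" "(x, y) \<in> hconn F"
      using path_from_cycle[OF assms(1)] by blast
    then show False using a by blast
  qed
qed



lemma comp_fin: "finite V \<Longrightarrow> finite (components V F)"
  by (simp add: components_cls)

lemma comp_sub: "\<forall>A\<in>F. A \<subseteq> V \<Longrightarrow> C \<in> components V F \<Longrightarrow> C \<subseteq> V"
  by (auto simp: components_cls dest: cls_sub_V)

lemma comp_ne: "C \<in> components V F \<Longrightarrow> C \<noteq> {}"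
  using cls_self by (fastforce simp: components_cls)

lemma comp_disj: "C1 \<in> components V F \<Longrightarrow> C2 \<in> components V F \<Longrightarrow> C1 \<noteq> C2 \<Longrightarrow> C1 \<inter> C2 = {}"
  by (auto simp: components_cls dest: cls_disj)

lemma comp_conn:
  assumes "C \<in> components V F" "x \<in> C" "y \<in> C"
  shows "(x, y) \<in> hconn F"
proof -
  obtain z where z: "C = cls F z" using assms(1) by (auto simp: components_cls)
  then have "(z, x) \<in> hconn F" "(z, y) \<in> hconn F" using assms by (auto simp: cls_def)
  then show ?thesis using hconn_sym hconn_trans by meson
qed

lemma comp_closed:
  assumes "C \<in> components V F" "x \<in> C" "(x, y) \<in> hconn F"
  shows "y \<in> C"
proof -
  obtain z where z: "C = cls F z" using assms(1) by (auto simp: components_cls)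
  then have "(z, x) \<in> hconn F" using assms by (auto simp: cls_def)
  then have "(z, y) \<in> hconn F" using assms(3) by (rule hconn_trans)
  then show ?thesis using z by (simp add: cls_def)
qed

lemma edge_in_comp:
  assumes "A \<in> F" "C \<in> components V F" "a \<in> A" "a \<in> C"
  shows "A \<subseteq> C"
proof
  fix y assume "y \<in> A"
  then have "(a, y) \<in> hconn F" using assms by (simp add: hconn_edge)
  then show "y \<in> C" using comp_closed[OF assms(2) assms(4)] by blast
qed

lemma cls_in_comp: "x \<in> V \<Longrightarrow> cls F x \<in> components V F"
  by (simp add: components_cls)

lemma hyperforest_mono: "F \<subseteq> F' \<Longrightarrow> hyperforest F' \<Longrightarrow> hyperforest F"
  unfolding hyperforest_def hcycle_def by blast

definition MMr :: "('v set \<Rightarrow> real) \<Rightarrow> 'v set set \<Rightarrow> 'v set \<Rightarrow> real" where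
  "MMr c F C = (\<Sum>A\<in>{A\<in>F. A \<subseteq> C}. c A)"

definition PP :: "('v::linorder set \<Rightarrow> real) \<Rightarrow> 'v set \<Rightarrow> 'v set set \<Rightarrow> 'v ev" where
  "PP c V F = (\<Prod>C\<in>components V F. hE (cs (MMr c F C)) C)"

lemma prod_merge:
  assumes "finite S" "finite B" "\<forall>C\<in>S. finite C \<and> card (C \<inter> B) = 1"
    "\<forall>C1\<in>S. \<forall>C2\<in>S. C1 \<noteq> C2 \<longrightarrow> C1 \<inter> C2 = {}"
  shows "hE (cs a) B * (\<Prod>C\<in>S. hE (cs (m C)) C) = hE (cs (a + (\<Sum>C\<in>S. m C))) (B \<union> \<Union>S)"
  using assms(1,3,4)
proof (induction S rule: finite_induct)
  case empty then show ?case by simp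
next
  case (insert C S)
  have IH: "hE (cs a) B * (\<Prod>C\<in>S. hE (cs (m C)) C) = hE (cs (a + (\<Sum>C\<in>S. m C))) (B \<union> \<Union>S)"
    using insert by auto
  have fC: "finite C" and c1: "card (C \<inter> B) = 1" using insert by auto
  then obtain v where v: "C \<inter> B = {v}" by (metis card_1_singletonE)
  have "\<forall>C'\<in>S. C \<inter> C' = {}"
  proof
    fix C' assume "C' \<in> S"
    then have "C \<noteq> C'" using insert.hyps(2) by blast
    then show "C \<inter> C' = {}" using insert.prems(2) \<open>C' \<in> S\<close> by simp
  qed
  then have "C \<inter> \<Union>S = {}" by blast
  then have int: "(B \<union> \<Union>S) \<inter> C = {v}" using v by blast
  have finU: "finite (B \<union> \<Union>S)" using insert assms(2) by auto
  have "hE (cs a) B * (\<Prod>C\<in>insert C S. hE (cs (m C)) C)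
      = (hE (cs a) B * (\<Prod>C\<in>S. hE (cs (m C)) C)) * hE (cs (m C)) C"
    using insert.hyps by (simp add: mult_ac)
  also have "\<dots> = hE (cs (a + (\<Sum>C\<in>S. m C)) + cs (m C)) ((B \<union> \<Union>S) \<union> C)"
    unfolding IH by (rule h_mult_one[OF finU fC int])
  also have "cs (a + (\<Sum>C\<in>S. m C)) + cs (m C) = cs (a + (\<Sum>C\<in>insert C S. m C))"
    using insert.hyps by (simp add: cs_add[symmetric] algebra_simps)
  also have "(B \<union> \<Union>S) \<union> C = B \<union> \<Union>(insert C S)" by auto
  finally show ?case .
qed

lemma card_merge:
  assumes "finite S" "finite B" "\<forall>C\<in>S. finite C \<and> card (C \<inter> B) = 1"
    "\<forall>C1\<in>S. \<forall>C2\<in>S. C1 \<noteq> C2 \<longrightarrow> C1 \<inter> C2 = {}"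
  shows "real (card (B \<union> \<Union>S)) = real (card B) + (\<Sum>C\<in>S. real (card C) - 1)"
  using assms(1,3,4)
proof (induction S rule: finite_induct)
  case empty then show ?case by simp
next
  case (insert C S)
  have IH: "real (card (B \<union> \<Union>S)) = real (card B) + (\<Sum>C\<in>S. real (card C) - 1)"
    using insert by auto
  have fC: "finite C" and c1: "card (C \<inter> B) = 1" using insert by auto
  then obtain v where v: "C \<inter> B = {v}" by (metis card_1_singletonE)
  have "\<forall>C'\<in>S. C \<inter> C' = {}"
  proof
    fix C' assume "C' \<in> S"
    then have "C \<noteq> C'" using insert.hyps(2) by blast
    then show "C \<inter> C' = {}" using insert.prems(2) \<open>C' \<in> S\<close> by simp
  qed
  then have "C \<inter> \<Union>S = {}" by blast
  then have int: "(B \<union> \<Union>S) \<inter> C = {v}" using v by blast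
  have finU: "finite (B \<union> \<Union>S)" using insert assms(2) by auto
  have "card ((B \<union> \<Union>S) \<union> C) + card ((B \<union> \<Union>S) \<inter> C) = card (B \<union> \<Union>S) + card C"
    using card_Un_Int[OF finU fC] by simp
  then have "real (card ((B \<union> \<Union>S) \<union> C)) = real (card (B \<union> \<Union>S)) + real (card C) - 1"
    using int by simp
  moreover have "(B \<union> \<Union>S) \<union> C = B \<union> \<Union>(insert C S)" by auto
  ultimately show ?case using IH insert.hyps by simp
qed

context
  fixes V :: "'v::linorder set" and F :: "'v set set" and B :: "'v set"
  assumes finV: "finite V" and FV: "\<forall>A\<in>F. A \<subseteq> V \<and> 2 \<le> card A"
    and BV: "B \<subseteq> V" and B2: "2 \<le> card B" and BF: "B \<notin> F"
begin

definition Cs where "Cs = {C \<in> components V F. C \<inter> B \<noteq> {}}"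
definition Os where "Os = components V F - Cs"

lemma FV': "\<forall>A\<in>F. A \<subseteq> V" using FV by blast

lemma finF: "finite F"
proof -
  have "F \<subseteq> Pow V" using FV by blast
  then show ?thesis using finV by (simp add: finite_subset)
qed

lemma Bne: "B \<noteq> {}" using B2 by auto
lemma finB: "finite B" using BV finV finite_subset by blast

lemma finCs: "finite Cs" using comp_fin[OF finV] by (simp add: Cs_def)

lemma Cs_sub: "Cs \<subseteq> components V F" by (auto simp: Cs_def)

lemma comps_split: "components V F = Cs \<union> Os" "Cs \<inter> Os = {}"
  by (auto simp: Cs_def Os_def)

lemma B_sub_UCs: "B \<subseteq> \<Union>Cs"
proof
  fix b assume b: "b \<in> B"
  then have "cls F b \<in> Cs" using BV cls_self[of b F] by (auto simp: Cs_def cls_in_comp)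
  then show "b \<in> \<Union>Cs" using cls_self[of b F] by blast
qed

lemma comps_insert: "components V (insert B F) = insert (\<Union>Cs) Os"
  using components_insert[OF FV' BV Bne] by (simp add: Cs_def Os_def)

lemma UCs_notin_Os: "\<Union>Cs \<notin> Os"
proof
  assume "\<Union>Cs \<in> Os"
  then have "\<Union>Cs \<inter> B = {}" by (auto simp: Os_def Cs_def)
  then show False using B_sub_UCs Bne by blast
qed

lemma Cs_disj: "C1 \<in> Cs \<Longrightarrow> C2 \<in> Cs \<Longrightarrow> C1 \<noteq> C2 \<Longrightarrow> C1 \<inter> C2 = {}"
  using comp_disj Cs_sub by blast

lemma MM_Os: "D \<in> Os \<Longrightarrow> MMr c (insert B F) D = MMr c F D"
proof -
  assume D: "D \<in> Os"
  then have "D \<inter> B = {}" by (auto simp: Os_def Cs_def)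
  then have "\<not> B \<subseteq> D" using Bne by blast
  then have "{A \<in> insert B F. A \<subseteq> D} = {A \<in> F. A \<subseteq> D}" by auto
  then show ?thesis by (simp add: MMr_def)
qed

lemma MM_UCs: "MMr c (insert B F) (\<Union>Cs) = c B + (\<Sum>C\<in>Cs. MMr c F C)"
proof -
  have eq: "{A \<in> insert B F. A \<subseteq> \<Union>Cs} = insert B (\<Union>C\<in>Cs. {A \<in> F. A \<subseteq> C})"
  proof (intro equalityI subsetI)
    fix A assume A: "A \<in> {A \<in> insert B F. A \<subseteq> \<Union>Cs}"
    show "A \<in> insert B (\<Union>C\<in>Cs. {A \<in> F. A \<subseteq> C})"
    proof (cases "A = B")
      case False
      then have AF: "A \<in> F" "A \<subseteq> \<Union>Cs" using A by auto
      then have "A \<noteq> {}" using FV by fastforce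
      then obtain a where a: "a \<in> A" by blast
      then obtain C where C: "C \<in> Cs" "a \<in> C" using AF by blast
      then have "A \<subseteq> C" using edge_in_comp[OF AF(1) _ a] Cs_sub by blast
      then show ?thesis using C AF by blast
    qed simp
  next
    fix A assume "A \<in> insert B (\<Union>C\<in>Cs. {A \<in> F. A \<subseteq> C})"
    then show "A \<in> {A \<in> insert B F. A \<subseteq> \<Union>Cs}" using B_sub_UCs by auto
  qed
  have fin: "finite (\<Union>C\<in>Cs. {A \<in> F. A \<subseteq> C})" by (rule finite_subset[OF _ finF]) auto
  have Bnot: "B \<notin> (\<Union>C\<in>Cs. {A \<in> F. A \<subseteq> C})" using BF by auto
  have disj: "\<forall>C1\<in>Cs. \<forall>C2\<in>Cs. C1 \<noteq> C2 \<longrightarrow> {A \<in> F. A \<subseteq> C1} \<inter> {A \<in> F. A \<subseteq> C2} = {}"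
  proof (intro ballI impI)
    fix C1 C2 assume C: "C1 \<in> Cs" "C2 \<in> Cs" "C1 \<noteq> C2"
    then have d: "C1 \<inter> C2 = {}" by (rule Cs_disj)
    show "{A \<in> F. A \<subseteq> C1} \<inter> {A \<in> F. A \<subseteq> C2} = {}"
    proof (rule ccontr)
      assume "{A \<in> F. A \<subseteq> C1} \<inter> {A \<in> F. A \<subseteq> C2} \<noteq> {}"
      then obtain A where "A \<in> F" "A \<subseteq> C1" "A \<subseteq> C2" by blast
      moreover have "A \<noteq> {}" using FV \<open>A \<in> F\<close> by fastforce
      ultimately show False using d by blast
    qed
  qed
  have "MMr c (insert B F) (\<Union>Cs) = c B + (\<Sum>A\<in>(\<Union>C\<in>Cs. {A \<in> F. A \<subseteq> C}). c A)"
    unfolding MMr_def eq using fin Bnot by simp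
  also have "(\<Sum>A\<in>(\<Union>C\<in>Cs. {A \<in> F. A \<subseteq> C}). c A) = (\<Sum>C\<in>Cs. MMr c F C)"
    unfolding MMr_def using finCs finF disj by (subst sum.UNION_disjoint) auto
  finally show ?thesis .
qed

lemma Cs_one:
  assumes "hyperforest F" "hyperforest (insert B F)" "C \<in> Cs"
  shows "card (C \<inter> B) = 1"
proof -
  have ne: "C \<inter> B \<noteq> {}" using assms(3) by (simp add: Cs_def)
  have fin: "finite (C \<inter> B)" using finB by simp
  have "\<forall>x\<in>C \<inter> B. \<forall>y\<in>C \<inter> B. x = y"
  proof (intro ballI)
    fix x y assume "x \<in> C \<inter> B" "y \<in> C \<inter> B"
    moreover have "C \<in> components V F" using Cs_sub assms(3) by blast
    ultimately have "(x, y) \<in> hconn F" using comp_conn[of C V F x y] by blast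
    then show "x = y" using forest_insert_iff[OF assms(1) BF] assms(2) \<open>x \<in> C \<inter> B\<close> \<open>y \<in> C \<inter> B\<close> by blast
  qed
  then obtain x where "C \<inter> B = {x}" using ne by blast
  then show ?thesis by simp
qed


lemma KEY:
  assumes hf: "hyperforest F"
  shows "hE (cs (c B)) B * PP c V F = (if hyperforest (insert B F) then PP c V (insert B F) else 0)"
proof -
  let ?h = "\<lambda>C. hE (cs (MMr c F C)) C"
  have finOs: "finite Os" using comp_fin[OF finV] by (simp add: Os_def)
  have PPs: "PP c V F = (\<Prod>C\<in>Cs. ?h C) * (\<Prod>C\<in>Os. ?h C)"
    unfolding PP_def comps_split(1) by (rule prod.union_disjoint[OF finCs finOs comps_split(2)])
  have finC: "C \<in> Cs \<Longrightarrow> finite C" for C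
    using Cs_sub comp_sub[OF FV'] finV finite_subset by blast
  show ?thesis
  proof (cases "hyperforest (insert B F)")
    case True
    have m: "hE (cs (c B)) B * (\<Prod>C\<in>Cs. ?h C) = hE (cs (c B + (\<Sum>C\<in>Cs. MMr c F C))) (B \<union> \<Union>Cs)"
      by (rule prod_merge[OF finCs finB]) (use finC Cs_one[OF hf True] Cs_disj in auto)
    have BU: "B \<union> \<Union>Cs = \<Union>Cs" using B_sub_UCs by blast
    have "PP c V (insert B F) = hE (cs (MMr c (insert B F) (\<Union>Cs))) (\<Union>Cs) * (\<Prod>C\<in>Os. hE (cs (MMr c (insert B F) C)) C)"
      unfolding PP_def comps_insert using finOs UCs_notin_Os by simp
    also have "(\<Prod>C\<in>Os. hE (cs (MMr c (insert B F) C)) C) = (\<Prod>C\<in>Os. ?h C)"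
      by (rule prod.cong) (simp_all add: MM_Os)
    finally have "PP c V (insert B F) = hE (cs (c B + (\<Sum>C\<in>Cs. MMr c F C))) (B \<union> \<Union>Cs) * (\<Prod>C\<in>Os. ?h C)"
      unfolding MM_UCs BU .
    then show ?thesis using True PPs m by (simp add: mult.assoc[symmetric])
  next
    case False
    obtain x y where xy: "x \<in> B" "y \<in> B" "x \<noteq> y" "(x, y) \<in> hconn F"
      using False forest_insert_iff[OF hf BF] by blast
    define C where "C = cls F x"
    have xV: "x \<in> V" using xy BV by blast
    have CC: "C \<in> components V F" using xV by (simp add: C_def cls_in_comp)
    have xC: "x \<in> C" and yC: "y \<in> C" using xy by (simp_all add: C_def cls_def)
    have CCs: "C \<in> Cs" using CC xC xy by (auto simp: Cs_def)
    have z: "hE (cs (c B)) B * ?h C = 0"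
      by (rule h_mult_two[OF finB finC[OF CCs] xy(1,2) xC yC xy(3)])
    have "(\<Prod>C\<in>Cs. ?h C) = ?h C * (\<Prod>C\<in>Cs - {C}. ?h C)"
      using finCs CCs by (rule prod.remove)
    then have "hE (cs (c B)) B * PP c V F = (hE (cs (c B)) B * ?h C) * ((\<Prod>C\<in>Cs - {C}. ?h C) * (\<Prod>C\<in>Os. ?h C))"
      unfolding PPs by (simp add: mult_ac)
    then show ?thesis using False z by simp
  qed
qed

end



lemma hconn_empty: "hconn {} = Id"
  by (simp add: hconn_adj adj_def)

lemma components_empty: "components V {} = (\<lambda>x. {x}) ` V"
  by (simp add: components_cls cls_def hconn_empty)

lemma count_comp:
  fixes V :: "'v::linorder set"
  assumes "finite V" "finite F" "\<forall>A\<in>F. A \<subseteq> V \<and> 2 \<le> card A" "hyperforest F" "C \<in> components V F"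
  shows "MMr (\<lambda>A. real (card A) - 1) F C = real (card C) - 1"
  using assms(2-5)
proof (induction F arbitrary: C rule: finite_induct)
  case empty
  then obtain x where "C = {x}" by (auto simp: components_empty)
  then show ?case by (simp add: MMr_def)
next
  case (insert B F)
  let ?c = "\<lambda>A. real (card A) - 1"
  have FV: "\<forall>A\<in>F. A \<subseteq> V \<and> 2 \<le> card A" and BV: "B \<subseteq> V" and B2: "2 \<le> card B"
    using insert.prems by auto
  have hf: "hyperforest F" using hyperforest_mono[OF _ insert.prems(2)] by blast
  note ctx = assms(1) FV BV B2 insert.hyps(2)
  have IH: "\<And>C. C \<in> components V F \<Longrightarrow> MMr ?c F C = real (card C) - 1"
    using insert.IH[OF FV hf] by blast
  have "C \<in> insert (\<Union>(Cs V F B)) (Os V F B)"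
    using insert.prems(3) comps_insert[OF ctx] by simp
  then show ?case
  proof
    assume CU: "C = \<Union>(Cs V F B)"
    have finC: "finite C'" if "C' \<in> Cs V F B" for C'
    proof -
      have "C' \<in> components V F" using Cs_sub[OF ctx] that by blast
      moreover have "\<forall>A\<in>F. A \<subseteq> V" using FV by blast
      ultimately have "C' \<subseteq> V" using comp_sub by blast
      then show ?thesis using assms(1) by (rule finite_subset)
    qed
    have "MMr ?c (insert B F) C = ?c B + (\<Sum>C'\<in>Cs V F B. MMr ?c F C')"
      unfolding CU by (rule MM_UCs[OF ctx])
    also have "(\<Sum>C'\<in>Cs V F B. MMr ?c F C') = (\<Sum>C'\<in>Cs V F B. real (card C') - 1)"
      using IH Cs_sub[OF ctx] by (intro sum.cong) auto
    also have "?c B + (\<Sum>C'\<in>Cs V F B. real (card C') - 1) = real (card (B \<union> \<Union>(Cs V F B))) - 1"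
    proof -
      have "real (card (B \<union> \<Union>(Cs V F B))) = real (card B) + (\<Sum>C'\<in>Cs V F B. real (card C') - 1)"
        by (rule card_merge[OF finCs[OF ctx] finB[OF ctx]])
          (use finC Cs_one[OF ctx hf insert.prems(2)] Cs_disj[OF ctx] in auto)
      then show ?thesis by simp
    qed
    also have "B \<union> \<Union>(Cs V F B) = C" using B_sub_UCs[OF ctx] CU by blast
    finally show ?thesis .
  next
    assume CO: "C \<in> Os V F B"
    then have "C \<in> components V F" by (simp add: Os_def[OF ctx])
    then show ?thesis using MM_Os[OF ctx CO] IH by simp
  qed
qed

definition GG :: "'v set \<Rightarrow> ('v \<times> bool) set" where "GG V = V \<times> UNIV"

lemma finGG: "finite V \<Longrightarrow> finite (GG V)"
  by (simp add: GG_def)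

lemma lowG_cs0: "lowG G 0 (cs r)"
  by (simp add: lowG_def cs.rep_eq gscale_def gone_def)

lemma lowG_tau:
  assumes "finite V" "finite S" "S \<subseteq> V"
  shows "lowG (GG V) (card S) (tauE S)"
  using assms(2,3)
proof (induction S rule: finite_induct)
  case empty then show ?case by (simp add: lowG_one)
next
  case (insert v S)
  have "lowG (GG V) 2 (e v v)" using insert.prems by (intro lowG_e) (auto simp: GG_def)
  moreover have "lowG (GG V) (card S) (tauE S)" using insert by simp
  ultimately have "lowG (GG V) (2 + card S) (e v v * tauE S)"
    by (rule lowG_mult[rotated]) (rule finGG, rule assms(1))
  moreover have "card (insert v S) = Suc (card S)" using insert.hyps by simp
  ultimately show ?case using insert.hyps by (simp add: tau_ins) (rule lowG_mono, assumption, simp)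
qed

lemma lowG_h:
  assumes "finite V" "A \<subseteq> V" "2 \<le> card A"
  shows "lowG (GG V) 1 (hE (cs r) A)"
proof -
  have fA: "finite A" using assms finite_subset by blast
  have fG: "finite (GG V)" using assms(1) by (rule finGG)
  have t: "lowG (GG V) (card S) (tauE S)" if "S \<subseteq> A" for S
  proof -
    have "finite S" using fA that by (rule finite_subset[rotated])
    moreover have "S \<subseteq> V" using that assms(2) by blast
    ultimately show ?thesis using lowG_tau[of V S] assms(1) by blast
  qed
  have "lowG (GG V) (card A) (cs r * tauE A)"
    using lowG_mult[OF fG lowG_cs0 t[of A]] by simp
  then have 1: "lowG (GG V) 1 (cs r * tauE A)"
    by (rule lowG_mono) (use assms(3) in simp)
  have 2: "lowG (GG V) 1 (sigE A)"
    unfolding sigE_def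
  proof (rule lowG_sum)
    fix i assume "i \<in> A"
    then have "1 \<le> card (A - {i})" using assms(3) fA by simp
    then show "lowG (GG V) 1 (tauE (A - {i}))" using t[of "A - {i}"] by (auto intro: lowG_mono)
  qed
  have 3: "lowG (GG V) 1 (rhoE A)"
    unfolding rhoE_def
  proof (intro lowG_sum)
    fix i j assume ij: "i \<in> A" "j \<in> A - {i}"
    have "lowG (GG V) 2 (e i j)" using ij assms(2) by (intro lowG_e) (auto simp: GG_def)
    then have "lowG (GG V) (2 + card (A - {i, j})) (e i j * tauE (A - {i, j}))"
      using lowG_mult[OF fG _ t[of "A - {i, j}"]] by blast
    then show "lowG (GG V) 1 (e i j * tauE (A - {i, j}))" by (auto intro: lowG_mono)
  qed
  show ?thesis unfolding hE_def using 1 2 3 by (intro lowG_add lowG_diff lowG_uminus)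
qed



lemma SF_empty: "spanning_hyperforests {} = {{}}"
  by (auto simp: spanning_hyperforests_def hyperforest_def hcycle_def)

lemma SF_finite: "finite E \<Longrightarrow> finite (spanning_hyperforests E)"
  by (rule finite_subset[of _ "Pow E"]) (auto simp: spanning_hyperforests_def)

lemma SF_insert:
  assumes "B \<notin> E"
  shows "spanning_hyperforests (insert B E) =
    spanning_hyperforests E \<union> insert B ` {F \<in> spanning_hyperforests E. hyperforest (insert B F)}"
proof (intro equalityI subsetI)
  fix F assume F: "F \<in> spanning_hyperforests (insert B E)"
  show "F \<in> spanning_hyperforests E \<union> insert B ` {F \<in> spanning_hyperforests E. hyperforest (insert B F)}"
  proof (cases "B \<in> F")
    case True
    have "F - {B} \<subseteq> E" "hyperforest (F - {B})" and ins: "insert B (F - {B}) = F"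
      using F True hyperforest_mono[of "F - {B}" F] by (auto simp: spanning_hyperforests_def)
    moreover have "hyperforest F" using F by (simp add: spanning_hyperforests_def)
    ultimately have "F - {B} \<in> {F \<in> spanning_hyperforests E. hyperforest (insert B F)}"
      by (simp add: spanning_hyperforests_def)
    then have "insert B (F - {B}) \<in> insert B ` {F \<in> spanning_hyperforests E. hyperforest (insert B F)}"
      by (rule imageI)
    then show ?thesis unfolding ins by blast
  next
    case False
    then show ?thesis using F by (auto simp: spanning_hyperforests_def)
  qed
next
  fix F assume "F \<in> spanning_hyperforests E \<union> insert B ` {F \<in> spanning_hyperforests E. hyperforest (insert B F)}"
  then show "F \<in> spanning_hyperforests (insert B E)" by (auto simp: spanning_hyperforests_def)
qed

lemma PP_empty: "PP c V {} = 1"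
proof -
  have "\<And>x. hE (cs (MMr c {} {x})) {x} = 1" by (simp add: MMr_def h_single)
  then show ?thesis by (simp add: PP_def components_empty prod.reindex)
qed

lemma ex_zero: "ex N 0 = 1"
proof -
  have "ex N 0 = (\<Sum>n\<le>N. if n = 0 then 1 else 0)"
    unfolding ex_def by (rule sum.cong) (auto simp: power_0_left)
  then show ?thesis by simp
qed

lemma main_ind:
  fixes V :: "'v::linorder set" and E :: "'v set set" and w c :: "'v set \<Rightarrow> real"
  assumes finV: "finite V" and finE: "finite E" and EV: "\<forall>A\<in>E. A \<subseteq> V \<and> 2 \<le> card A"
  shows "ex (Suc (card (GG V))) (\<Sum>A\<in>E. cs (w A) * hE (cs (c A)) A)
     = (\<Sum>F\<in>spanning_hyperforests E. cs (\<Prod>A\<in>F. w A) * PP c V F)"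
  using finE EV
proof (induction E rule: finite_induct)
  case empty
  then show ?case by (simp add: SF_empty PP_empty ex_zero)
next
  case (insert B E)
  let ?N = "Suc (card (GG V))"
  let ?x = "\<lambda>A. cs (w A) * hE (cs (c A)) A"
  let ?s = "\<Sum>A\<in>E. ?x A"
  let ?g = "\<lambda>F. cs (\<Prod>A\<in>F. w A) * PP c V F"
  have EV: "\<forall>A\<in>E. A \<subseteq> V \<and> 2 \<le> card A" and BV: "B \<subseteq> V" and B2: "2 \<le> card B"
    using insert.prems by auto
  have IH: "ex ?N ?s = (\<Sum>F\<in>spanning_hyperforests E. ?g F)" using insert.IH EV by blast
  have fG: "finite (GG V)" using finV by (rule finGG)
  have finB: "finite B" using BV finV finite_subset by blast
  obtain u where u: "u \<in> B" using B2 by fastforce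
  have "card (B - {u}) \<ge> 1" using B2 u finB by simp
  then have "B - {u} \<noteq> {}" by (metis card.empty not_one_le_zero)
  then obtain v where v: "v \<in> B - {u}" by blast
  have uv: "u \<in> B" "v \<in> B" "u \<noteq> v" using u v by auto
  have yy: "?x B * ?x B = 0"
  proof -
    have "?x B * ?x B = (cs (w B) * cs (w B)) * (hE (cs (c B)) B * hE (cs (c B)) B)" by (simp add: mult_ac)
    also have "hE (cs (c B)) B * hE (cs (c B)) B = 0" by (rule h_mult_two[OF finB finB uv(1,2) uv(1,2) uv(3)])
    finally show ?thesis by simp
  qed
  have "lowG (GG V) 1 ?s"
  proof (rule lowG_sum)
    fix A assume "A \<in> E"
    then show "lowG (GG V) 1 (?x A)" using EV lowG_h[OF finV] by (auto intro: lowG_cs)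
  qed
  then have "lowG (GG V) ?N (?s ^ ?N)" by (rule lowG_pow[OF fG])
  then have sN: "?s ^ ?N = 0" by (rule lowG_big[OF fG]) simp
  have "ex ?N (\<Sum>A\<in>insert B E. ?x A) = ex ?N (?s + ?x B)"
    using insert.hyps by (simp add: add.commute)
  also have "\<dots> = (1 + ?x B) * ex ?N ?s" by (rule ex_add[OF yy sN])
  also have "\<dots> = (\<Sum>F\<in>spanning_hyperforests E. ?g F) + (\<Sum>F\<in>spanning_hyperforests E. ?x B * ?g F)"
    unfolding IH by (simp add: distrib_right sum_distrib_left sum.distrib)
  also have "(\<Sum>F\<in>spanning_hyperforests E. ?x B * ?g F)
     = (\<Sum>F\<in>spanning_hyperforests E. if hyperforest (insert B F) then ?g (insert B F) else 0)"
  proof (rule sum.cong[OF refl])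
    fix F assume F: "F \<in> spanning_hyperforests E"
    then have FE: "F \<subseteq> E" and hf: "hyperforest F" by (auto simp: spanning_hyperforests_def)
    have FV: "\<forall>A\<in>F. A \<subseteq> V \<and> 2 \<le> card A" using FE EV by blast
    have BF: "B \<notin> F" using FE insert.hyps by blast
    have finF: "finite F" using FE insert.hyps(1) by (rule finite_subset)
    have "?x B * ?g F = (cs (w B) * cs (\<Prod>A\<in>F. w A)) * (hE (cs (c B)) B * PP c V F)"
      by (simp add: mult_ac)
    also have "hE (cs (c B)) B * PP c V F = (if hyperforest (insert B F) then PP c V (insert B F) else 0)"
      by (rule KEY[OF finV FV BV B2 BF hf])
    also have "cs (w B) * cs (\<Prod>A\<in>F. w A) = cs (\<Prod>A\<in>insert B F. w A)"
      using finF BF by (simp add: cs_mult)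
    finally show "?x B * ?g F = (if hyperforest (insert B F) then ?g (insert B F) else 0)" by simp
  qed
  also have "\<dots> = (\<Sum>F\<in>{F \<in> spanning_hyperforests E. hyperforest (insert B F)}. ?g (insert B F))"
    by (simp add: sum.inter_filter SF_finite insert.hyps)
  also have "\<dots> = (\<Sum>F\<in>insert B ` {F \<in> spanning_hyperforests E. hyperforest (insert B F)}. ?g F)"
  proof (rule sum.reindex[symmetric, unfolded comp_def])
    show "inj_on (insert B) {F \<in> spanning_hyperforests E. hyperforest (insert B F)}"
      using insert.hyps(2) by (auto simp: inj_on_def spanning_hyperforests_def)
  qed
  also have "(\<Sum>F\<in>spanning_hyperforests E. ?g F) + \<dots> = (\<Sum>F\<in>spanning_hyperforests (insert B E). ?g F)"
  proof -
    have d: "spanning_hyperforests E \<inter> insert B ` {F \<in> spanning_hyperforests E. hyperforest (insert B F)} = {}"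
      using insert.hyps(2) by (auto simp: spanning_hyperforests_def)
    show ?thesis unfolding SF_insert[OF insert.hyps(2)]
      by (rule sum.union_disjoint[symmetric]) (use d SF_finite[OF insert.hyps(1)] in auto)
  qed
  finally show ?case .
qed


lemma final_gen:
  fixes V :: "'v::linorder set" and E :: "'v set set" and w c :: "'v set \<Rightarrow> real"
    and fe :: "'v set \<Rightarrow> 'v grass" and fc :: "'v set set \<Rightarrow> 'v set \<Rightarrow> 'v grass"
  assumes finV: "finite V" and EV: "\<forall>A\<in>E. A \<subseteq> V \<and> 2 \<le> card A"
    and fe: "\<And>A. A \<in> E \<Longrightarrow> fe A = rep (hE (cs (c A)) A)"
    and fc: "\<And>F. F \<in> spanning_hyperforests E \<Longrightarrow> gprod_set (components V F) (fc F) = rep (PP c V F)"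
  shows "gexp (\<Sum>A\<in>E. gscale (w A) (fe A))
     = (\<Sum>F\<in>spanning_hyperforests E. gscale (\<Prod>A\<in>F. w A) (gprod_set (components V F) (fc F)))"
proof -
  have finE: "finite E"
    by (rule finite_subset[of _ "Pow V"]) (use EV finV in auto)
  let ?s = "\<Sum>A\<in>E. cs (w A) * hE (cs (c A)) A"
  have fG: "finite (GG V)" using finV by (rule finGG)
  have "(\<Sum>A\<in>E. gscale (w A) (fe A)) = rep ?s"
    by (simp add: rep_sum rep_cs_mult fe)
  moreover have "lowG (GG V) 1 ?s"
  proof (rule lowG_sum)
    fix A assume "A \<in> E"
    then show "lowG (GG V) 1 (cs (w A) * hE (cs (c A)) A)" using EV lowG_h[OF finV] by (auto intro: lowG_cs)
  qed
  then have "gexp (rep ?s) = rep (ex (Suc (card (GG V))) ?s)"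
    by (rule gexp_rep[OF fG]) simp
  moreover have "ex (Suc (card (GG V))) ?s = (\<Sum>F\<in>spanning_hyperforests E. cs (\<Prod>A\<in>F. w A) * PP c V F)"
    by (rule main_ind[OF finV finE EV])
  moreover have "rep (\<Sum>F\<in>spanning_hyperforests E. cs (\<Prod>A\<in>F. w A) * PP c V F)
      = (\<Sum>F\<in>spanning_hyperforests E. gscale (\<Prod>A\<in>F. w A) (gprod_set (components V F) (fc F)))"
    by (simp add: rep_sum rep_cs_mult fc)
  ultimately show ?thesis by simp
qed

lemma avg_eq:
  fixes V :: "'v::linorder set"
  assumes finV: "finite V" and EV: "\<forall>A\<in>E. A \<subseteq> V \<and> 2 \<le> card A"
    and F: "F \<in> spanning_hyperforests E" and C: "C \<in> components V F"
  shows "lam_avg lams F C * (real (card C) - 1) = MMr (\<lambda>A. lams A * (real (card A) - 1)) F C"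
proof -
  have FE: "F \<subseteq> E" and hf: "hyperforest F" using F by (auto simp: spanning_hyperforests_def)
  have FV: "\<forall>A\<in>F. A \<subseteq> V \<and> 2 \<le> card A" using FE EV by blast
  have finF: "finite F" by (rule finite_subset[of _ "Pow V"]) (use FV finV in auto)
  let ?S = "{A \<in> F. A \<subseteq> C}"
  have finS: "finite ?S" using finF by simp
  have den: "(\<Sum>A\<in>?S. real (card A) - 1) = real (card C) - 1"
    using count_comp[OF finV finF FV hf C] by (simp add: MMr_def)
  have num: "(\<Sum>A\<in>?S. (real (card A) - 1) * lams A) = MMr (\<lambda>A. lams A * (real (card A) - 1)) F C"
    by (simp add: MMr_def mult.commute)
  show ?thesis
  proof (cases "real (card C) - 1 = 0")
    case True
    have e: "?S = {}"
    proof (rule ccontr)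
      assume "?S \<noteq> {}"
      then obtain A0 where A0: "A0 \<in> ?S" by blast
      have "(\<Sum>A\<in>?S. real (card A) - 1) \<ge> real (card A0) - 1"
        by (rule member_le_sum[OF A0]) (use FV finS in auto)
      moreover have "real (card A0) - 1 \<ge> 1" using A0 FV by auto
      ultimately show False using den True by simp
    qed
    show ?thesis unfolding MMr_def e using True by simp
  next
    case False
    then show ?thesis unfolding lam_avg_def den num by simp
  qed
qed

theorem corollary4p5:
  fixes V :: "'v::linorder set" and E :: "'v set set"
    and w :: "'v set \<Rightarrow> real" and lam :: real and lams :: "'v set \<Rightarrow> real"
  assumes "finite V"
    and "\<forall>A\<in>E. A \<subseteq> V \<and> 2 \<le> card A"
  shows "gexp (\<Sum>A\<in>E. gscale (w A) (fA lam A))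
           = (\<Sum>F\<in>spanning_hyperforests E.
                gscale (\<Prod>A\<in>F. w A) (gprod_set (components V F) (\<lambda>C. fA lam C)))
       \<and> gexp (\<Sum>A\<in>E. gscale (w A) (fA (lams A) A))
           = (\<Sum>F\<in>spanning_hyperforests E.
                gscale (\<Prod>A\<in>F. w A) (gprod_set (components V F) (\<lambda>C. fA (lam_avg lams F C) C)))"
proof
  have compfin: "\<And>F. finite (components V F)" using assms(1) by (rule comp_fin)
  show "gexp (\<Sum>A\<in>E. gscale (w A) (fA lam A))
           = (\<Sum>F\<in>spanning_hyperforests E.
                gscale (\<Prod>A\<in>F. w A) (gprod_set (components V F) (\<lambda>C. fA lam C)))"
  proof (rule final_gen[OF assms, where c = "\<lambda>A. lam * (real (card A) - 1)"])
    fix A show "fA lam A = rep (hE (cs (lam * (real (card A) - 1))) A)" by (rule fA_rep)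
  next
    fix F assume F: "F \<in> spanning_hyperforests E"
    show "gprod_set (components V F) (\<lambda>C. fA lam C) = rep (PP (\<lambda>A. lam * (real (card A) - 1)) V F)"
      unfolding PP_def
    proof (rule gprod_set_rep[OF compfin])
      fix C assume C: "C \<in> components V F"
      have "MMr (\<lambda>A. lam * (real (card A) - 1)) F C = lam_avg (\<lambda>_. lam) F C * (real (card C) - 1)"
        using avg_eq[OF assms F C, of "\<lambda>_. lam"] by simp
      also have "\<dots> = lam * (real (card C) - 1)"
      proof -
        have "MMr (\<lambda>A. lam * (real (card A) - 1)) F C = lam * MMr (\<lambda>A. real (card A) - 1) F C"
          by (simp add: MMr_def sum_distrib_left)
        moreover have "MMr (\<lambda>A. real (card A) - 1) F C = real (card C) - 1"
        proof -
          have FE: "F \<subseteq> E" and hf: "hyperforest F" using F by (auto simp: spanning_hyperforests_def)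
          have FV: "\<forall>A\<in>F. A \<subseteq> V \<and> 2 \<le> card A" using FE assms(2) by blast
          have finF: "finite F" by (rule finite_subset[of _ "Pow V"]) (use FV assms(1) in auto)
          show ?thesis by (rule count_comp[OF assms(1) finF FV hf C])
        qed
        ultimately show ?thesis using avg_eq[OF assms F C, of "\<lambda>_. lam"] by simp
      qed
      finally have "MMr (\<lambda>A. lam * (real (card A) - 1)) F C = lam * (real (card C) - 1)" .
      then show "fA lam C = rep (hE (cs (MMr (\<lambda>A. lam * (real (card A) - 1)) F C)) C)"
        by (simp add: fA_rep)
    qed
  qed
  show "gexp (\<Sum>A\<in>E. gscale (w A) (fA (lams A) A))
           = (\<Sum>F\<in>spanning_hyperforests E.
                gscale (\<Prod>A\<in>F. w A) (gprod_set (components V F) (\<lambda>C. fA (lam_avg lams F C) C)))"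
  proof (rule final_gen[OF assms, where c = "\<lambda>A. lams A * (real (card A) - 1)"])
    fix A show "fA (lams A) A = rep (hE (cs (lams A * (real (card A) - 1))) A)" by (rule fA_rep)
  next
    fix F assume F: "F \<in> spanning_hyperforests E"
    show "gprod_set (components V F) (\<lambda>C. fA (lam_avg lams F C) C) = rep (PP (\<lambda>A. lams A * (real (card A) - 1)) V F)"
      unfolding PP_def
    proof (rule gprod_set_rep[OF compfin])
      fix C assume C: "C \<in> components V F"
      show "fA (lam_avg lams F C) C = rep (hE (cs (MMr (\<lambda>A. lams A * (real (card A) - 1)) F C)) C)"
        by (simp add: fA_rep avg_eq[OF assms F C])
    qed
  qed
qed


end
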